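(* Let $\mathcal X,\mathcal Y,\mathcal R$ be sets of binary strings, $r\in\mathbb N$, $F$ a random variable taking values in functions $\mathcal X\to\mathcal Y$, $\mathcal Z\subseteq\mathcal Y^r$, $Z$ a distribution on $\mathcal Z$, $g:\mathcal Z\to\mathcal R$ injective, and $\underline v\in\mathcal X^r$ with pairwise distinct entries. Let $U_B,U_C$ be unitaries, $|\psi\rangle$ a state on $B\otimes C$, $q_B,q_C\in\mathbb N$, and let $\{\Pi_B^w\}_{w\in\mathcal R}$ and $\{\Pi_C^w\}_{w\in\mathcal R}$ be families of pairwise orthogonal projectors on $B$ and $C$ respectively, with $\Pi^w=\Pi_B^w\otimes\Pi_C^w$. Then there is a polynomial $p$ (independent of all other data) such that $$\mathbb E_F\,\mathbb E_{\underline z\leftarrow Z}\Big\|\Pi^{g(\underline z)}\Big((U_BO_B^{F_{\underline v,\underline z}})^{q_B}\otimes(U_CO_C^{F_{\underline v,\underline z}})^{q_C}\Big)|\psi\rangle\Big\|^2\le 9p_{\max}+p(q_B,q_C)\sqrt M,$$ where $p_{\max}=\max_{w\in\mathcal R}\Pr_{\underline z\leftarrow Z}[g(\underline z)=w]$ and $$M=\mathbb E_k\,\mathbb E_l\,\mathbb E_F\,\mathbb E_{\underline z\leftarrow Z}\Big\|(P_{\underline v}\otimes P_{\underline v})\Big((U_BO_B^{F_{\underline v,\underline z}})^{k}\otimes(U_CO_C^{F_{\underline v,\underline z}})^{l}\Big)|\psi\rangle\Big\|^2,$$ with $k$ uniform in $\{0,\dots,q_B-1\}$, $l$ uniform in 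$\{0,\dots,q_C-1\}$.
   Context: For $\underline v\in\mathcal X^r$ with distinct entries and $\underline z\in\mathcal Y^r$, $F_{\underline v,\underline z}$ is the function equal to $F$ except that $F_{\underline v,\underline z}(\underline v_i)=\underline z_i$ for each $i$. For a function $F'$, $O_B^{F'}$ is the oracle unitary $|x\rangle|y\rangle\mapsto|x\rangle|y\oplus F'(x)\rangle$ acting on a query input register (over $\mathcal X$) and output register (over $\mathcal Y$) contained in system $B$ (identity elsewhere); $O_C^{F'}$ likewise on $C$. $P_{\underline v}=\sum_{i=1}^r|\underline v_i\rangle\langle\underline v_i|$ acts on the query input register of the respective system (identity on the rest). *)

theory Defs
  imports "HOL-Probability.Probability" "HOL-Computational_Algebra.Polynomial"
begin

type_synonym bs = "bool list"

(* Basis index of a system containing a query input register (over X),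
   an output register (over Y = {0,1}^m) and a remaining workspace (index set W) *)
type_synonym bidx = "bs \<times> bs \<times> nat"

(* Finite-dimensional vectors / operators, with explicit finite carrier (basis) sets *)
type_synonym 'i vect = "'i \<Rightarrow> complex"
type_synonym 'i oper = "'i \<Rightarrow> 'i \<Rightarrow> complex"

definition strings_of_len :: "nat \<Rightarrow> bs set" where
  "strings_of_len m = {y. length y = m}"

definition bxor :: "bs \<Rightarrow> bs \<Rightarrow> bs" where
  "bxor a b = map2 (\<lambda>p q. p \<noteq> q) a b"

definition reg_space :: "bs set \<Rightarrow> nat \<Rightarrow> nat set \<Rightarrow> bidx set" where
  "reg_space X m W = X \<times> strings_of_len m \<times> W"

definition op_mult :: "'i set \<Rightarrow> 'i oper \<Rightarrow> 'i oper \<Rightarrow> 'i oper" where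
  "op_mult S A B = (\<lambda>i j. \<Sum>k\<in>S. A i k * B k j)"

definition op_apply :: "'i set \<Rightarrow> 'i oper \<Rightarrow> 'i vect \<Rightarrow> 'i vect" where
  "op_apply S A v = (\<lambda>i. \<Sum>k\<in>S. A i k * v k)"

definition vnorm :: "'i set \<Rightarrow> 'i vect \<Rightarrow> real" where
  "vnorm S v = sqrt (\<Sum>i\<in>S. (cmod (v i))\<^sup>2)"

definition op_id :: "'i set \<Rightarrow> 'i oper" where
  "op_id S = (\<lambda>i j. if i = j \<and> i \<in> S then 1 else 0)"

fun op_pow :: "'i set \<Rightarrow> 'i oper \<Rightarrow> nat \<Rightarrow> 'i oper" where
  "op_pow S A 0 = op_id S"
| "op_pow S A (Suc n) = op_mult S A (op_pow S A n)"

definition supported_op :: "'i set \<Rightarrow> 'i oper \<Rightarrow> bool" where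
  "supported_op S A \<longleftrightarrow> (\<forall>i j. i \<notin> S \<or> j \<notin> S \<longrightarrow> A i j = 0)"

definition is_unitary :: "'i set \<Rightarrow> 'i oper \<Rightarrow> bool" where
  "is_unitary S U \<longleftrightarrow> supported_op S U \<and>
     (\<forall>i\<in>S. \<forall>j\<in>S. (\<Sum>k\<in>S. U i k * cnj (U j k)) = (if i = j then 1 else 0))"

definition is_projector :: "'i set \<Rightarrow> 'i oper \<Rightarrow> bool" where
  "is_projector S P \<longleftrightarrow> supported_op S P \<and> (\<forall>i j. P i j = cnj (P j i)) \<and> op_mult S P P = P"

definition is_state :: "'i set \<Rightarrow> 'i vect \<Rightarrow> bool" where
  "is_state S \<psi> \<longleftrightarrow> (\<forall>i. i \<notin> S \<longrightarrow> \<psi> i = 0) \<and> vnorm S \<psi> = 1"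

definition tensor :: "'i oper \<Rightarrow> 'j oper \<Rightarrow> ('i \<times> 'j) oper" where
  "tensor A B = (\<lambda>(i1, i2) (j1, j2). A i1 j1 * B i2 j2)"

(* O^f : |x>|y>|w> \<mapsto> |x>|y xor f(x)>|w> on the carrier S *)
definition query_unitary :: "bidx set \<Rightarrow> (bs \<Rightarrow> bs) \<Rightarrow> bidx oper" where
  "query_unitary S f = (\<lambda>(x, y, w) (x', y', w').
     if (x, y, w) \<in> S \<and> (x', y', w') \<in> S \<and> x = x' \<and> w = w' \<and> y = bxor y' (f x) then 1 else 0)"

definition query_op :: "bidx set \<Rightarrow> bidx oper \<Rightarrow> (bs \<Rightarrow> bs) \<Rightarrow> bidx oper" where
  "query_op S U f = op_mult S U (query_unitary S f)"

definition query_proj :: "bidx set \<Rightarrow> bs list \<Rightarrow> bidx oper" where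
  "query_proj S v = (\<lambda>(x, y, w) j. if (x, y, w) = j \<and> j \<in> S \<and> x \<in> set v then 1 else 0)"

definition reprogram :: "(bs \<Rightarrow> bs) \<Rightarrow> bs list \<Rightarrow> bs list \<Rightarrow> (bs \<Rightarrow> bs)" where
  "reprogram f v z = foldr (\<lambda>(a, b) h. h(a := b)) (zip v z) f"

(* bivariate real polynomial p(a,b), represented as a polynomial in a with
   coefficients polynomials in b *)
definition eval_poly2 :: "real poly poly \<Rightarrow> real \<Rightarrow> real \<Rightarrow> real" where
  "eval_poly2 P a b = poly (poly P [:b:]) a"

end

theory Submission
  imports Defs
begin

definition ns :: "'i set \<Rightarrow> 'i vect \<Rightarrow> real" where
  "ns S v = (\<Sum>i\<in>S. (cmod (v i))\<^sup>2)"

lemma ns_nonneg: "ns S v \<ge> 0"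
  unfolding ns_def by (simp add: sum_nonneg)

lemma vnorm_ns: "vnorm S v = sqrt (ns S v)"
  unfolding vnorm_def ns_def ..

lemma vnorm_nonneg: "vnorm S v \<ge> 0"
  by (simp add: vnorm_ns ns_nonneg)

lemma vnorm_sq: "(vnorm S v)\<^sup>2 = ns S v"
  by (simp add: vnorm_ns ns_nonneg)

lemma vnorm_L2: "vnorm S v = L2_set (\<lambda>i. cmod (v i)) S"
  unfolding vnorm_def L2_set_def ..

definition ip :: "'i set \<Rightarrow> 'i vect \<Rightarrow> 'i vect \<Rightarrow> complex" where
  "ip S x y = (\<Sum>i\<in>S. cnj (x i) * y i)"

lemma ip_self: "ip S x x = of_real (ns S x)"
proof -
  have "cnj (x i) * x i = of_real ((cmod (x i))\<^sup>2)" for i by (metis complex_norm_square mult.commute)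
  then show ?thesis unfolding ip_def ns_def of_real_sum by simp
qed

lemma ip_CS: "cmod (ip S x y) \<le> vnorm S x * vnorm S y"
proof -
  have "cmod (ip S x y) \<le> (\<Sum>i\<in>S. cmod (cnj (x i) * y i))"
    unfolding ip_def by (rule norm_sum)
  also have "\<dots> = (\<Sum>i\<in>S. \<bar>cmod (x i)\<bar> * \<bar>cmod (y i)\<bar>)"
    by (simp add: norm_mult)
  also have "\<dots> \<le> vnorm S x * vnorm S y"
    unfolding vnorm_L2 by (rule L2_set_mult_ineq)
  finally show ?thesis .
qed

lemma vnorm_triangle: "vnorm S (\<lambda>i. x i + y i) \<le> vnorm S x + vnorm S y"
proof -
  have "vnorm S (\<lambda>i. x i + y i) \<le> L2_set (\<lambda>i. cmod (x i) + cmod (y i)) S"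
    unfolding vnorm_L2 by (rule L2_set_mono) (auto intro: norm_triangle_ineq)
  also have "\<dots> \<le> vnorm S x + vnorm S y"
    unfolding vnorm_L2 by (rule L2_set_triangle_ineq)
  finally show ?thesis .
qed

lemma vnorm_diff: "vnorm S (\<lambda>i. x i - y i) \<le> vnorm S x + vnorm S y"
proof -
  have "vnorm S (\<lambda>i. x i - y i) \<le> L2_set (\<lambda>i. cmod (x i) + cmod (y i)) S"
    unfolding vnorm_L2 by (rule L2_set_mono) (auto intro: norm_triangle_ineq4)
  also have "\<dots> \<le> vnorm S x + vnorm S y"
    unfolding vnorm_L2 by (rule L2_set_triangle_ineq)
  finally show ?thesis .
qed

lemma vnorm_sum: "finite K \<Longrightarrow> vnorm S (\<lambda>i. \<Sum>k\<in>K. x k i) \<le> (\<Sum>k\<in>K. vnorm S (x k))"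
proof (induction K rule: finite_induct)
  case empty then show ?case by (simp add: vnorm_def)
next
  case (insert a K)
  have "vnorm S (\<lambda>i. \<Sum>k\<in>insert a K. x k i) = vnorm S (\<lambda>i. x a i + (\<Sum>k\<in>K. x k i))"
    using insert by simp
  also have "\<dots> \<le> vnorm S (x a) + vnorm S (\<lambda>i. \<Sum>k\<in>K. x k i)"
    by (rule vnorm_triangle)
  also have "\<dots> \<le> vnorm S (x a) + (\<Sum>k\<in>K. vnorm S (x k))" using insert by simp
  finally show ?case using insert by simp
qed

lemma vnorm_cong: "(\<And>i. i \<in> S \<Longrightarrow> x i = y i) \<Longrightarrow> vnorm S x = vnorm S y"
  unfolding vnorm_def by simp

definition adj :: "'i oper \<Rightarrow> 'i oper" where
  "adj A = (\<lambda>i j. cnj (A j i))"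

lemma adj_adj[simp]: "adj (adj A) = A"
  unfolding adj_def by simp

lemma ip_adj: "ip S x (op_apply S A y) = ip S (op_apply S (adj A) x) y"
proof -
  have "ip S x (op_apply S A y) = (\<Sum>i\<in>S. \<Sum>k\<in>S. cnj (x i) * (A i k * y k))"
    unfolding ip_def op_apply_def by (simp only: sum_distrib_left)
  also have "\<dots> = (\<Sum>k\<in>S. \<Sum>i\<in>S. cnj (x i) * (A i k * y k))"
    by (rule sum.swap)
  also have "\<dots> = (\<Sum>k\<in>S. (\<Sum>i\<in>S. A i k * cnj (x i)) * y k)"
    by (simp only: sum_distrib_right) (intro sum.cong refl, simp only: mult_ac)
  also have "\<dots> = ip S (op_apply S (adj A) x) y"
    unfolding ip_def op_apply_def adj_def by simp
  finally show ?thesis .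
qed

lemma proj_abstract:
  assumes herm: "\<And>x y. ip S x (G y) = ip S (G x) y"
    and idem: "\<And>x. G (G x) = G x"
  shows "ip S u (G u) = of_real (ns S (G u))" and "vnorm S (G u) \<le> vnorm S u"
proof -
  show 1: "ip S u (G u) = of_real (ns S (G u))"
    using herm[of u "G u"] idem[of u] by (simp add: ip_self)
  have "ns S (G u) \<le> vnorm S u * vnorm S (G u)"
    using ip_CS[of S u "G u"] 1 ns_nonneg[of S "G u"] by simp
  then have "(vnorm S (G u))\<^sup>2 \<le> vnorm S u * vnorm S (G u)" by (simp add: vnorm_sq)
  then show "vnorm S (G u) \<le> vnorm S u"
    using vnorm_nonneg[of S "G u"] vnorm_nonneg[of S u]
    by (metis less_eq_real_def mult_le_cancel_right not_le power2_eq_square zero_less_mult_iff)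
qed

lemma op_apply_mult: "op_apply S (op_mult S A B) v = op_apply S A (op_apply S B v)"
proof -
  have "op_apply S (op_mult S A B) v i = op_apply S A (op_apply S B v) i" for i
  proof -
    have "op_apply S (op_mult S A B) v i = (\<Sum>j\<in>S. \<Sum>k\<in>S. A i k * B k j * v j)"
      unfolding op_apply_def op_mult_def by (simp only: sum_distrib_right)
    also have "\<dots> = (\<Sum>k\<in>S. \<Sum>j\<in>S. A i k * B k j * v j)" by (rule sum.swap)
    also have "\<dots> = op_apply S A (op_apply S B v) i"
      unfolding op_apply_def by (simp only: sum_distrib_left mult.assoc)
    finally show ?thesis .
  qed
  then show ?thesis by auto
qed

lemma op_apply_cong: "(\<And>i. i \<in> S \<Longrightarrow> v i = w i) \<Longrightarrow> op_apply S A v = op_apply S A w"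
  unfolding op_apply_def by simp

lemma herm_op: assumes "\<And>i j. P i j = cnj (P j i)" shows "adj P = P"
proof (intro ext)
  fix i j show "adj P i j = P i j" unfolding adj_def using assms[of j i] by simp
qed

lemma projector_contr:
  assumes "is_projector S P"
  shows "vnorm S (op_apply S P u) \<le> vnorm S u"
proof -
  have h: "adj P = P" using assms unfolding is_projector_def by (intro herm_op) blast
  have i: "op_mult S P P = P" using assms unfolding is_projector_def by blast
  have 1: "ip S x (op_apply S P y) = ip S (op_apply S P x) y" for x y
    using ip_adj[of S x P y] h by simp
  have 2: "op_apply S P (op_apply S P x) = op_apply S P x" for x
    using op_apply_mult[of S P P x] i by simp
  show ?thesis
    by (rule proj_abstract(2)[where G="op_apply S P", OF 1 2])
qed

lemma op_apply_id: "finite S \<Longrightarrow> op_apply S (op_id S) w = (\<lambda>i. if i \<in> S then w i else 0)"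
proof (intro ext)
  fix i assume "finite S"
  have "(\<Sum>k\<in>S. (if i = k \<and> i \<in> S then 1 else 0) * w k) = (\<Sum>k\<in>S. if k = i then (if i \<in> S then w i else 0) else 0)"
    by (intro sum.cong) auto
  also have "\<dots> = (if i \<in> S then w i else 0)" using \<open>finite S\<close> by (simp add: sum.delta)
  finally show "op_apply S (op_id S) w i = (if i \<in> S then w i else 0)" unfolding op_apply_def op_id_def .
qed

lemma vnorm_mono_ns: "ns S x \<le> ns S y \<Longrightarrow> vnorm S x \<le> vnorm S y"
  by (simp add: vnorm_ns)

lemma unitary_contr:
  assumes U: "is_unitary S U" and fin: "finite S"
  shows "vnorm S (op_apply S U u) \<le> vnorm S u"
proof -
  have sup: "\<And>i j. i \<notin> S \<or> j \<notin> S \<Longrightarrow> U i j = 0" using U unfolding is_unitary_def supported_op_def by auto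
  have row: "\<And>i j. i \<in> S \<Longrightarrow> j \<in> S \<Longrightarrow> (\<Sum>k\<in>S. U i k * cnj (U j k)) = (if i = j then 1 else 0)"
    using U unfolding is_unitary_def by auto
  define G where "G = (\<lambda>u. op_apply S (adj U) (op_apply S U u))"
  have UUs: "op_apply S U (op_apply S (adj U) w) = (\<lambda>i. if i \<in> S then w i else 0)" for w
  proof -
    have "op_mult S U (adj U) = op_id S"
    proof (intro ext)
      fix i j
      show "op_mult S U (adj U) i j = op_id S i j"
        using row[of i j] sup unfolding op_mult_def adj_def op_id_def
        by (cases "i\<in>S"; cases "j\<in>S") auto
    qed
    then show ?thesis
      using op_apply_mult[of S U "adj U" w] op_apply_id[OF fin] by simp
  qed
  have idem: "G (G x) = G x" for x
  proof -
    have "G (G x) = op_apply S (adj U) (\<lambda>i. if i \<in> S then op_apply S U x i else 0)"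
      unfolding G_def UUs ..
    also have "\<dots> = G x" unfolding G_def by (rule op_apply_cong) simp
    finally show ?thesis .
  qed
  have herm: "ip S x (G y) = ip S (G x) y" for x y
    unfolding G_def using ip_adj[of S x "adj U"] ip_adj[of S "op_apply S U x" U y] by simp
  have "ip S u (G u) = ip S (op_apply S U u) (op_apply S U u)"
    unfolding G_def using ip_adj[of S u "adj U"] by simp
  then have "ns S (op_apply S U u) = ns S (G u)"
    using proj_abstract(1)[of S G u, OF herm idem] by (simp add: ip_self)
  moreover have "ns S (G u) \<le> ns S u"
    using proj_abstract(2)[of S G u, OF herm idem] vnorm_nonneg[of S "G u"]
    by (metis power_mono vnorm_sq)
  ultimately show ?thesis by (intro vnorm_mono_ns) simp
qed


lemma length_bxor[simp]: "length (bxor a b) = min (length a) (length b)"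
  unfolding bxor_def by simp

lemma bxor_bxor: "length a = length b \<Longrightarrow> bxor (bxor a b) b = a"
proof (induction a arbitrary: b)
  case Nil then show ?case by (simp add: bxor_def)
next
  case (Cons x a)
  then obtain y b' where b: "b = y # b'" by (cases b) auto
  with Cons show ?case by (auto simp: bxor_def)
qed

lemma bxor_iff:
  assumes "length y = m" "length y' = m" "length c = m"
  shows "(y = bxor y' c) \<longleftrightarrow> (y' = bxor y c)"
  using assms bxor_bxor by (metis length_bxor min.idem)

lemma finite_strings: "finite (strings_of_len m)"
  using finite_lists_length_eq[of "UNIV::bool set" m] unfolding strings_of_len_def by simp

lemma finite_reg_space: "finite X \<Longrightarrow> finite W \<Longrightarrow> finite (reg_space X m W)"
  unfolding reg_space_def by (simp add: finite_strings)

lemma reprogram_Cons: "reprogram f (a # v) (b # z) = (reprogram f v z)(a := b)"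
  unfolding reprogram_def by simp

lemma reprogram_out: "x \<notin> set v \<Longrightarrow> reprogram f v z x = f x"
proof (induction v arbitrary: z)
  case Nil then show ?case by (simp add: reprogram_def)
next
  case (Cons a v)
  show ?case
  proof (cases z)
    case Nil then show ?thesis by (simp add: reprogram_def)
  next
    case (Cons b z') with Cons.prems Cons.IH show ?thesis by (simp add: reprogram_Cons)
  qed
qed

lemma reprogram_len:
  assumes "f x \<in> strings_of_len m" "set z \<subseteq> strings_of_len m"
  shows "reprogram f v z x \<in> strings_of_len m"
  using assms
proof (induction v arbitrary: z)
  case Nil then show ?case by (simp add: reprogram_def)
next
  case (Cons a v)
  show ?case
  proof (cases z)
    case Nil then show ?thesis using Cons.prems by (simp add: reprogram_def)
  next
    case (Cons b z') with Cons.prems Cons.IH[of z'] show ?thesis by (simp add: reprogram_Cons)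
  qed
qed

lemma query_apply:
  assumes S: "S = reg_space X m W" and fin: "finite X" "finite W"
    and f: "\<forall>x\<in>X. f x \<in> strings_of_len m"
  shows "op_apply S (query_unitary S f) u =
    (\<lambda>(x,y,w). if (x,y,w) \<in> S then u (x, bxor y (f x), w) else 0)"
proof (intro ext, clarify)
  fix x y w
  have finS: "finite S" using S fin finite_reg_space by blast
  show "op_apply S (query_unitary S f) u (x,y,w) = (if (x,y,w) \<in> S then u (x, bxor y (f x), w) else 0)"
  proof (cases "(x,y,w) \<in> S")
    case False then show ?thesis unfolding op_apply_def query_unitary_def by simp
  next
    case True
    then have x: "x \<in> X" and y: "length y = m" and w: "w \<in> W"
      using S unfolding reg_space_def strings_of_len_def by auto
    have fx: "length (f x) = m" using f x unfolding strings_of_len_def by auto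
    define k0 where "k0 = (x, bxor y (f x), w)"
    have k0S: "k0 \<in> S" using S x y w fx unfolding k0_def reg_space_def strings_of_len_def by auto
    have "op_apply S (query_unitary S f) u (x,y,w) = (\<Sum>k\<in>S. if k = k0 then u k0 else 0)"
      unfolding op_apply_def
    proof (intro sum.cong refl)
      fix k assume kS: "k \<in> S"
      obtain x' y' w' where k: "k = (x',y',w')" by (cases k) auto
      have y': "length y' = m" using kS k S unfolding reg_space_def strings_of_len_def by auto
      show "query_unitary S f (x,y,w) k * u k = (if k = k0 then u k0 else 0)"
        using True kS k y y' fx bxor_iff[of y m y' "f x"] unfolding query_unitary_def k0_def
        by auto
    qed
    also have "\<dots> = u k0" using finS k0S by (simp add: sum.delta')
    finally show ?thesis using True k0_def by simp
  qed
qed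

lemma query_norm:
  assumes S: "S = reg_space X m W" and fin: "finite X" "finite W"
    and f: "\<forall>x\<in>X. f x \<in> strings_of_len m"
  shows "vnorm S (op_apply S (query_unitary S f) u) = vnorm S u"
proof -
  define \<tau> where "\<tau> = (\<lambda>(x::bs, y::bs, w::nat). (x, bxor y (f x), w))"
  have tS: "\<tau> k \<in> S" and tt: "\<tau> (\<tau> k) = k" if "k \<in> S" for k
  proof -
    obtain x y w where k: "k = (x,y,w)" by (cases k) auto
    have x: "x \<in> X" and y: "length y = m" and w: "w \<in> W"
      using that k S unfolding reg_space_def strings_of_len_def by auto
    have fx: "length (f x) = m" using f x unfolding strings_of_len_def by auto
    show "\<tau> k \<in> S" using S x y w fx k unfolding \<tau>_def reg_space_def strings_of_len_def by auto
    show "\<tau> (\<tau> k) = k" using k y fx bxor_bxor[of y "f x"] unfolding \<tau>_def by auto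
  qed
  have "ns S (op_apply S (query_unitary S f) u) = (\<Sum>k\<in>S. (cmod (u (\<tau> k)))\<^sup>2)"
    unfolding ns_def query_apply[OF assms]
    by (intro sum.cong refl) (auto simp: \<tau>_def)
  also have "\<dots> = ns S u"
    unfolding ns_def
    by (rule sum.reindex_bij_witness[of S \<tau> \<tau>]) (auto simp: tS tt)
  finally show ?thesis by (simp add: vnorm_ns)
qed


definition lift1 :: "'a set \<Rightarrow> 'a oper \<Rightarrow> ('a \<times> 'b) vect \<Rightarrow> ('a \<times> 'b) vect" where
  "lift1 SB A ch = (\<lambda>p. \<Sum>b'\<in>SB. A (fst p) b' * ch (b', snd p))"

definition lift2 :: "'b set \<Rightarrow> 'b oper \<Rightarrow> ('a \<times> 'b) vect \<Rightarrow> ('a \<times> 'b) vect" where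
  "lift2 SC B ch = (\<lambda>p. \<Sum>c'\<in>SC. B (snd p) c' * ch (fst p, c'))"

lemma sum_prod_split: "(\<Sum>p\<in>A \<times> B. h p) = (\<Sum>a\<in>A. \<Sum>b\<in>B. h (a, b))"
  by (simp add: sum.cartesian_product)

lemma ns_prod1: "finite SB \<Longrightarrow> finite SC \<Longrightarrow> ns (SB \<times> SC) ch = (\<Sum>c\<in>SC. ns SB (\<lambda>b. ch (b, c)))"
  unfolding ns_def sum_prod_split by (rule sum.swap)

lemma ns_prod2: "finite SB \<Longrightarrow> finite SC \<Longrightarrow> ns (SB \<times> SC) ch = (\<Sum>b\<in>SB. ns SC (\<lambda>c. ch (b, c)))"
  unfolding ns_def sum_prod_split ..

lemma vnorm_bound_ns:
  assumes "vnorm S x \<le> K * vnorm S y" "K \<ge> 0"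
  shows "ns S x \<le> K\<^sup>2 * ns S y"
proof -
  have "(vnorm S x)\<^sup>2 \<le> (K * vnorm S y)\<^sup>2" using assms vnorm_nonneg by (intro power_mono) auto
  then show ?thesis by (simp add: vnorm_sq power_mult_distrib)
qed

lemma ns_bound_vnorm:
  assumes "ns S x \<le> K\<^sup>2 * ns S y" "K \<ge> 0"
  shows "vnorm S x \<le> K * vnorm S y"
proof -
  have "sqrt (ns S x) \<le> sqrt (K\<^sup>2 * ns S y)" using assms by simp
  then show ?thesis using assms(2) by (simp add: vnorm_ns real_sqrt_mult)
qed

lemma lift1_bound:
  assumes fin: "finite SB" "finite SC" and K: "K \<ge> 0"
    and A: "\<And>u. vnorm SB (op_apply SB A u) \<le> K * vnorm SB u"
  shows "vnorm (SB \<times> SC) (lift1 SB A ch) \<le> K * vnorm (SB \<times> SC) ch"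
proof (rule ns_bound_vnorm[OF _ K])
  have "ns (SB \<times> SC) (lift1 SB A ch) = (\<Sum>c\<in>SC. ns SB (op_apply SB A (\<lambda>b. ch (b, c))))"
    unfolding ns_prod1[OF fin] by (simp add: lift1_def op_apply_def)
  also have "\<dots> \<le> (\<Sum>c\<in>SC. K\<^sup>2 * ns SB (\<lambda>b. ch (b, c)))"
    by (intro sum_mono vnorm_bound_ns[OF A K])
  also have "\<dots> = K\<^sup>2 * ns (SB \<times> SC) ch" unfolding ns_prod1[OF fin] by (simp add: sum_distrib_left)
  finally show "ns (SB \<times> SC) (lift1 SB A ch) \<le> K\<^sup>2 * ns (SB \<times> SC) ch" .
qed

lemma lift2_bound:
  assumes fin: "finite SB" "finite SC" and K: "K \<ge> 0"
    and A: "\<And>u. vnorm SC (op_apply SC A u) \<le> K * vnorm SC u"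
  shows "vnorm (SB \<times> SC) (lift2 SC A ch) \<le> K * vnorm (SB \<times> SC) ch"
proof (rule ns_bound_vnorm[OF _ K])
  have "ns (SB \<times> SC) (lift2 SC A ch) = (\<Sum>b\<in>SB. ns SC (op_apply SC A (\<lambda>c. ch (b, c))))"
    unfolding ns_prod2[OF fin] by (simp add: lift2_def op_apply_def)
  also have "\<dots> \<le> (\<Sum>b\<in>SB. K\<^sup>2 * ns SC (\<lambda>c. ch (b, c)))"
    by (intro sum_mono vnorm_bound_ns[OF A K])
  also have "\<dots> = K\<^sup>2 * ns (SB \<times> SC) ch" unfolding ns_prod2[OF fin] by (simp add: sum_distrib_left)
  finally show "ns (SB \<times> SC) (lift2 SC A ch) \<le> K\<^sup>2 * ns (SB \<times> SC) ch" .
qed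

lemma lift1_sumbound:
  assumes fin: "finite SB" "finite SC" "finite W"
    and A: "\<And>u. (\<Sum>w\<in>W. ns SB (op_apply SB (P w) u)) \<le> ns SB u"
  shows "(\<Sum>w\<in>W. ns (SB \<times> SC) (lift1 SB (P w) ch)) \<le> ns (SB \<times> SC) ch"
proof -
  have "(\<Sum>w\<in>W. ns (SB \<times> SC) (lift1 SB (P w) ch)) = (\<Sum>c\<in>SC. \<Sum>w\<in>W. ns SB (op_apply SB (P w) (\<lambda>b. ch (b, c))))"
    unfolding ns_prod1[OF fin(1,2)] by (simp add: lift1_def op_apply_def sum.swap[of _ W])
  also have "\<dots> \<le> (\<Sum>c\<in>SC. ns SB (\<lambda>b. ch (b, c)))"
    by (intro sum_mono A)
  also have "\<dots> = ns (SB \<times> SC) ch" unfolding ns_prod1[OF fin(1,2)] ..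
  finally show ?thesis .
qed

lemma lift2_sumbound:
  assumes fin: "finite SB" "finite SC" "finite W"
    and A: "\<And>u. (\<Sum>w\<in>W. ns SC (op_apply SC (P w) u)) \<le> ns SC u"
  shows "(\<Sum>w\<in>W. ns (SB \<times> SC) (lift2 SC (P w) ch)) \<le> ns (SB \<times> SC) ch"
proof -
  have "(\<Sum>w\<in>W. ns (SB \<times> SC) (lift2 SC (P w) ch)) = (\<Sum>b\<in>SB. \<Sum>w\<in>W. ns SC (op_apply SC (P w) (\<lambda>c. ch (b, c))))"
    unfolding ns_prod2[OF fin(1,2)] by (simp add: lift2_def op_apply_def sum.swap[of _ W])
  also have "\<dots> \<le> (\<Sum>b\<in>SB. ns SC (\<lambda>c. ch (b, c)))"
    by (intro sum_mono A)
  also have "\<dots> = ns (SB \<times> SC) ch" unfolding ns_prod2[OF fin(1,2)] ..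
  finally show ?thesis .
qed

lemma lift1_mult: "lift1 SB (op_mult SB A B) ch = lift1 SB A (lift1 SB B ch)"
proof (intro ext)
  fix p
  have "lift1 SB A (lift1 SB B ch) p = op_apply SB A (op_apply SB B (\<lambda>b. ch (b, snd p))) (fst p)"
    unfolding lift1_def op_apply_def by simp
  also have "\<dots> = op_apply SB (op_mult SB A B) (\<lambda>b. ch (b, snd p)) (fst p)"
    by (simp add: op_apply_mult)
  finally show "lift1 SB (op_mult SB A B) ch p = lift1 SB A (lift1 SB B ch) p"
    unfolding lift1_def op_apply_def by simp
qed

lemma lift2_mult: "lift2 SC (op_mult SC A B) ch = lift2 SC A (lift2 SC B ch)"
proof (intro ext)
  fix p
  have "lift2 SC A (lift2 SC B ch) p = op_apply SC A (op_apply SC B (\<lambda>c. ch (fst p, c))) (snd p)"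
    unfolding lift2_def op_apply_def by simp
  also have "\<dots> = op_apply SC (op_mult SC A B) (\<lambda>c. ch (fst p, c)) (snd p)"
    by (simp add: op_apply_mult)
  finally show "lift2 SC (op_mult SC A B) ch p = lift2 SC A (lift2 SC B ch) p"
    unfolding lift2_def op_apply_def by simp
qed

lemma lift_comm: "lift1 SB A (lift2 SC B ch) = lift2 SC B (lift1 SB A ch)"
proof (intro ext)
  fix p
  show "lift1 SB A (lift2 SC B ch) p = lift2 SC B (lift1 SB A ch) p"
    unfolding lift1_def lift2_def
    by (simp add: sum_distrib_left mult.left_commute sum.swap[of _ SB SC])
qed

lemma tensor_lift: "finite SB \<Longrightarrow> finite SC \<Longrightarrow>
  op_apply (SB \<times> SC) (tensor A B) ch = lift1 SB A (lift2 SC B ch)"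
  unfolding op_apply_def tensor_def lift1_def lift2_def
  by (auto intro!: ext simp: sum_prod_split sum_distrib_left mult.assoc)

lemma lift1_diff: "lift1 SB A (\<lambda>p. x p - y p) = (\<lambda>p. lift1 SB A x p - lift1 SB A y p)"
  unfolding lift1_def by (simp add: right_diff_distrib sum_subtractf)

lemma lift2_diff: "lift2 SC A (\<lambda>p. x p - y p) = (\<lambda>p. lift2 SC A x p - lift2 SC A y p)"
  unfolding lift2_def by (simp add: right_diff_distrib sum_subtractf)

lemma lift1_add: "lift1 SB A (\<lambda>p. x p + y p) = (\<lambda>p. lift1 SB A x p + lift1 SB A y p)"
  unfolding lift1_def by (simp add: distrib_left sum.distrib)

lemma lift2_add: "lift2 SC A (\<lambda>p. x p + y p) = (\<lambda>p. lift2 SC A x p + lift2 SC A y p)"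
  unfolding lift2_def by (simp add: distrib_left sum.distrib)

lemma lift1_id: "finite SB \<Longrightarrow> (\<And>b c. b \<notin> SB \<Longrightarrow> ch (b, c) = 0) \<Longrightarrow> lift1 SB (op_id SB) ch = ch"
proof (intro ext)
  fix p assume "finite SB" "\<And>b c. b \<notin> SB \<Longrightarrow> ch (b, c) = 0"
  then show "lift1 SB (op_id SB) ch p = ch p"
    using op_apply_id[of SB "\<lambda>b. ch (b, snd p)"]
    unfolding lift1_def op_apply_def by (cases p) (auto dest: fun_cong[of _ _ "fst p"])
qed

lemma lift2_id: "finite SC \<Longrightarrow> (\<And>b c. c \<notin> SC \<Longrightarrow> ch (b, c) = 0) \<Longrightarrow> lift2 SC (op_id SC) ch = ch"
proof (intro ext)
  fix p assume "finite SC" "\<And>b c. c \<notin> SC \<Longrightarrow> ch (b, c) = 0"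
  then show "lift2 SC (op_id SC) ch p = ch p"
    using op_apply_id[of SC "\<lambda>c. ch (fst p, c)"]
    unfolding lift2_def op_apply_def by (cases p) (auto dest: fun_cong[of _ _ "snd p"])
qed


definition lin :: "('i vect \<Rightarrow> 'i vect) \<Rightarrow> bool" where
  "lin F \<longleftrightarrow> (\<forall>x y. F (\<lambda>p. x p - y p) = (\<lambda>p. F x p - F y p))"

lemma lin_pow: "lin F \<Longrightarrow> lin (F ^^ n)"
  unfolding lin_def by (induction n) auto

lemma linD: "lin F \<Longrightarrow> F (\<lambda>p. x p - y p) = (\<lambda>p. F x p - F y p)"
  unfolding lin_def by blast

lemma lin_lift1: "lin (lift1 SB A)" unfolding lin_def by (simp add: lift1_diff)
lemma lin_lift2: "lin (lift2 SC A)" unfolding lin_def by (simp add: lift2_diff)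

lemma comm_pow: "(\<And>x. F (G x) = G (F x)) \<Longrightarrow> F ((G ^^ n) x) = (G ^^ n) (F x)"
  by (induction n) auto

lemma comm_pow2: "(\<And>x. F (G x) = G (F x)) \<Longrightarrow> (F ^^ m) ((G ^^ n) x) = (G ^^ n) ((F ^^ m) x)"
proof -
  assume c: "\<And>x. F (G x) = G (F x)"
  have "(F ^^ m) (G y) = G ((F ^^ m) y)" for y
    using comm_pow[of G F m y] c by metis
  then show ?thesis by (intro comm_pow) auto
qed

definition contr :: "'i set \<Rightarrow> ('i vect \<Rightarrow> 'i vect) \<Rightarrow> bool" where
  "contr S F \<longleftrightarrow> (\<forall>x. vnorm S (F x) \<le> vnorm S x)"

lemma contr_pow: "contr S F \<Longrightarrow> contr S (F ^^ n)"
  unfolding contr_def by (induction n) (auto intro: order_trans)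

lemma contr_comp: "contr S F \<Longrightarrow> contr S G \<Longrightarrow> contr S (\<lambda>x. F (G x))"
  unfolding contr_def by (auto intro: order_trans)

lemma contrD: "contr S F \<Longrightarrow> vnorm S (F x) \<le> vnorm S x"
  unfolding contr_def by blast

lemma lift1_pow: "lift1 SB (op_pow SB A n) ch = (lift1 SB A ^^ n) (lift1 SB (op_id SB) ch)"
  by (induction n) (auto simp: lift1_mult)

lemma lift2_pow: "lift2 SC (op_pow SC A n) ch = (lift2 SC A ^^ n) (lift2 SC (op_id SC) ch)"
  by (induction n) (auto simp: lift2_mult)

lemma tele:
  assumes lt: "lin Ft" and ct: "contr S Ft"
    and D: "\<And>x. vnorm S (\<lambda>p. F x p - Ft x p) \<le> 2 * vnorm S (Q x)"
  shows "vnorm S (\<lambda>p. (F ^^ q) x p - (Ft ^^ q) x p) \<le> (\<Sum>k<q. 2 * vnorm S (Q ((F ^^ k) x)))"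
proof (induction q)
  case 0 then show ?case by (simp add: vnorm_def)
next
  case (Suc q)
  define y where "y = (F ^^ q) x"
  define y' where "y' = (Ft ^^ q) x"
  have "(\<lambda>p. (F ^^ Suc q) x p - (Ft ^^ Suc q) x p) = (\<lambda>p. (F y p - Ft y p) + Ft (\<lambda>p. y p - y' p) p)"
    unfolding y_def y'_def linD[OF lt] by simp
  then have "vnorm S (\<lambda>p. (F ^^ Suc q) x p - (Ft ^^ Suc q) x p)
      \<le> vnorm S (\<lambda>p. F y p - Ft y p) + vnorm S (Ft (\<lambda>p. y p - y' p))"
    using vnorm_triangle[of S "\<lambda>p. F y p - Ft y p" "Ft (\<lambda>p. y p - y' p)"] by simp
  also have "\<dots> \<le> 2 * vnorm S (Q y) + vnorm S (\<lambda>p. y p - y' p)"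
    using D[of y] contrD[OF ct, of "\<lambda>p. y p - y' p"] by simp
  also have "\<dots> \<le> 2 * vnorm S (Q y) + (\<Sum>k<q. 2 * vnorm S (Q ((F ^^ k) x)))"
    using Suc unfolding y_def y'_def by simp
  finally show ?case unfolding y_def by simp
qed


lemma projector_facts:
  assumes "is_projector S P"
  shows "ip S x (op_apply S P y) = ip S (op_apply S P x) y"
    and "op_apply S P (op_apply S P x) = op_apply S P x"
proof -
  have h: "adj P = P" using assms unfolding is_projector_def by (intro herm_op) blast
  have i: "op_mult S P P = P" using assms unfolding is_projector_def by blast
  show "ip S x (op_apply S P y) = ip S (op_apply S P x) y"
    using ip_adj[of S x P y] h by simp
  show "op_apply S P (op_apply S P x) = op_apply S P x"
    using op_apply_mult[of S P P x] i by simp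
qed

lemma ip_sum2: "ip S x (\<lambda>i. \<Sum>w\<in>W. f w i) = (\<Sum>w\<in>W. ip S x (f w))"
  unfolding ip_def by (simp add: sum_distrib_left sum.swap[of _ S W])

lemma ip_sum1: "ip S (\<lambda>i. \<Sum>w\<in>W. f w i) y = (\<Sum>w\<in>W. ip S (f w) y)"
  unfolding ip_def by (simp add: sum_distrib_right sum.swap[of _ S W])

lemma op_apply_sum: "op_apply S A (\<lambda>i. \<Sum>w\<in>W. f w i) = (\<lambda>i. \<Sum>w\<in>W. op_apply S A (f w) i)"
  unfolding op_apply_def by (auto intro!: ext simp: sum_distrib_left sum.swap[of _ S W])

lemma orth_sum:
  assumes finS: "finite S" and finW: "finite W"
    and proj: "\<And>w. w \<in> W \<Longrightarrow> is_projector S (P w)"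
    and orth: "\<And>w w'. w \<in> W \<Longrightarrow> w' \<in> W \<Longrightarrow> w \<noteq> w' \<Longrightarrow> op_mult S (P w) (P w') = (\<lambda>_ _. 0)"
  shows "(\<Sum>w\<in>W. ns S (op_apply S (P w) u)) \<le> ns S u"
proof -
  define G where "G = (\<lambda>x i. \<Sum>w\<in>W. op_apply S (P w) x i)"
  have herm: "ip S x (G y) = ip S (G x) y" for x y
    unfolding G_def ip_sum1 ip_sum2 using projector_facts(1)[OF proj] by simp
  have pp: "op_apply S (P w) (op_apply S (P w') x) = (if w = w' then op_apply S (P w) x else (\<lambda>_. 0))"
    if "w \<in> W" "w' \<in> W" for w w' x
  proof (cases "w = w'")
    case True then show ?thesis using projector_facts(2)[OF proj[OF that(1)]] by simp
  next
    case False
    then have "op_apply S (P w) (op_apply S (P w') x) = op_apply S (\<lambda>_ _. 0) x"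
      using orth[OF that False] op_apply_mult[of S "P w" "P w'" x] by simp
    then show ?thesis using False unfolding op_apply_def by simp
  qed
  have idem: "G (G x) = G x" for x
  proof -
    have "G (G x) = (\<lambda>i. \<Sum>w\<in>W. \<Sum>w'\<in>W. op_apply S (P w) (op_apply S (P w') x) i)"
      unfolding G_def op_apply_sum ..
    also have "\<dots> = (\<lambda>i. \<Sum>w\<in>W. \<Sum>w'\<in>W. if w' = w then op_apply S (P w) x i else 0)"
      by (intro ext sum.cong refl) (auto simp: pp)
    also have "\<dots> = G x" unfolding G_def using finW by (simp add: sum.delta)
    finally show ?thesis .
  qed
  have "of_real (\<Sum>w\<in>W. ns S (op_apply S (P w) u)) = (\<Sum>w\<in>W. ip S u (op_apply S (P w) u))"
    unfolding of_real_sum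
    by (intro sum.cong refl proj_abstract(1)[symmetric] projector_facts[OF proj]) auto
  also have "\<dots> = ip S u (G u)" unfolding G_def ip_sum2 ..
  also have "\<dots> = of_real (ns S (G u))" by (rule proj_abstract(1)[OF herm idem])
  finally have eq: "(\<Sum>w\<in>W. ns S (op_apply S (P w) u)) = ns S (G u)" by (simp only: of_real_eq_iff)
  have "ns S (G u) \<le> ns S u"
    using proj_abstract(2)[OF herm idem, of u] vnorm_nonneg[of S "G u"]
    by (metis power_mono vnorm_sq)
  then show ?thesis using eq by simp
qed


lemma lift1_col: "lift1 SB A ch p = op_apply SB A (\<lambda>b. ch (b, snd p)) (fst p)"
  unfolding lift1_def op_apply_def ..

lemma lift2_col: "lift2 SC A ch p = op_apply SC A (\<lambda>c. ch (fst p, c)) (snd p)"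
  unfolding lift2_def op_apply_def ..

lemma query_proj_apply:
  "finite S \<Longrightarrow> op_apply S (query_proj S v) u = (\<lambda>k. if k \<in> S \<and> fst k \<in> set v then u k else 0)"
proof (intro ext)
  assume "finite S"
  fix k :: bidx
  obtain x y w where k: "k = (x,y,w)" by (cases k) auto
  have "op_apply S (query_proj S v) u k = (\<Sum>j\<in>S. if j = k then (if k \<in> S \<and> x \<in> set v then u k else 0) else 0)"
    unfolding op_apply_def query_proj_def k by (intro sum.cong refl) auto
  also have "\<dots> = (if k \<in> S \<and> fst k \<in> set v then u k else 0)"
    using \<open>finite S\<close> by (auto simp: k sum.delta')
  finally show "op_apply S (query_proj S v) u k = (if k \<in> S \<and> fst k \<in> set v then u k else 0)" .
qed

lemma query_unitary_agree:
  assumes "\<And>x. x \<notin> set v \<Longrightarrow> f' x = f x" and "fst k \<notin> set v"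
  shows "query_unitary S f' i k = query_unitary S f i k"
proof -
  obtain x y w where i: "i = (x,y,w)" by (cases i) auto
  obtain x' y' w' where k: "k = (x',y',w')" by (cases k) auto
  have "x = x' \<Longrightarrow> f' x = f x" using assms k by auto
  then show ?thesis unfolding query_unitary_def i k by auto
qed

lemma query_apply_agree:
  assumes "\<And>x. x \<notin> set v \<Longrightarrow> f' x = f x" and "finite S"
  shows "op_apply S (query_unitary S f') (\<lambda>b. u b - op_apply S (query_proj S v) u b)
       = op_apply S (query_unitary S f) (\<lambda>b. u b - op_apply S (query_proj S v) u b)"
  unfolding query_proj_apply[OF assms(2)] unfolding op_apply_def
  by (intro ext sum.cong refl) (auto simp: query_unitary_agree[OF assms(1)])

lemma query_op_contr:
  assumes S: "S = reg_space X m W" and fin: "finite X" "finite W"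
    and f: "\<forall>x\<in>X. f x \<in> strings_of_len m" and U: "is_unitary S U"
  shows "vnorm S (op_apply S (query_op S U f) u) \<le> vnorm S u"
proof -
  have finS: "finite S" using S fin finite_reg_space by blast
  have "vnorm S (op_apply S (query_op S U f) u) = vnorm S (op_apply S U (op_apply S (query_unitary S f) u))"
    unfolding query_op_def op_apply_mult ..
  also have "\<dots> \<le> vnorm S (op_apply S (query_unitary S f) u)" by (rule unitary_contr[OF U finS])
  also have "\<dots> = vnorm S u" by (rule query_norm[OF assms(1-4)])
  finally show ?thesis .
qed

lemma lift1_agree:
  assumes "\<And>x. x \<notin> set v \<Longrightarrow> f' x = f x" and fin: "finite SB"
  shows "lift1 SB (query_op SB U f') (\<lambda>p. ch p - lift1 SB (query_proj SB v) ch p)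
       = lift1 SB (query_op SB U f) (\<lambda>p. ch p - lift1 SB (query_proj SB v) ch p)"
proof -
  have "lift1 SB (query_unitary SB f') (\<lambda>p. ch p - lift1 SB (query_proj SB v) ch p)
      = lift1 SB (query_unitary SB f) (\<lambda>p. ch p - lift1 SB (query_proj SB v) ch p)"
  proof (intro ext)
    fix p
    show "lift1 SB (query_unitary SB f') (\<lambda>p. ch p - lift1 SB (query_proj SB v) ch p) p
      = lift1 SB (query_unitary SB f) (\<lambda>p. ch p - lift1 SB (query_proj SB v) ch p) p"
      using query_apply_agree[OF assms, where u="\<lambda>b. ch (b, snd p)"]
      unfolding lift1_col[of SB _ _ p] by (simp add: lift1_col)
  qed
  then show ?thesis unfolding query_op_def lift1_mult by simp
qed

lemma lift2_agree:
  assumes "\<And>x. x \<notin> set v \<Longrightarrow> f' x = f x" and fin: "finite SC"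
  shows "lift2 SC (query_op SC U f') (\<lambda>p. ch p - lift2 SC (query_proj SC v) ch p)
       = lift2 SC (query_op SC U f) (\<lambda>p. ch p - lift2 SC (query_proj SC v) ch p)"
proof -
  have "lift2 SC (query_unitary SC f') (\<lambda>p. ch p - lift2 SC (query_proj SC v) ch p)
      = lift2 SC (query_unitary SC f) (\<lambda>p. ch p - lift2 SC (query_proj SC v) ch p)"
  proof (intro ext)
    fix p
    show "lift2 SC (query_unitary SC f') (\<lambda>p. ch p - lift2 SC (query_proj SC v) ch p) p
      = lift2 SC (query_unitary SC f) (\<lambda>p. ch p - lift2 SC (query_proj SC v) ch p) p"
      using query_apply_agree[OF assms, where u="\<lambda>c. ch (fst p, c)"]
      unfolding lift2_col[of SC _ _ p] by (simp add: lift2_col)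
  qed
  then show ?thesis unfolding query_op_def lift2_mult by simp
qed

lemma diff_bound:
  assumes lF: "lin F" and lFt: "lin Ft" and cF: "contr S F" and cFt: "contr S Ft"
    and agree: "\<And>x. F (\<lambda>p. x p - Q x p) = Ft (\<lambda>p. x p - Q x p)"
  shows "vnorm S (\<lambda>p. F x p - Ft x p) \<le> 2 * vnorm S (Q x)"
proof -
  have eq: "(\<lambda>p. F x p - F (Q x) p) = (\<lambda>p. Ft x p - Ft (Q x) p)"
    using agree[of x] linD[OF lF, of x "Q x"] linD[OF lFt, of x "Q x"] by simp
  have "F x p - Ft x p = F (Q x) p - Ft (Q x) p" for p
  proof -
    have "F x p - F (Q x) p = Ft x p - Ft (Q x) p" using fun_cong[OF eq, of p] by simp
    then show ?thesis by (simp add: algebra_simps)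
  qed
  then have "(\<lambda>p. F x p - Ft x p) = (\<lambda>p. F (Q x) p - Ft (Q x) p)" by simp
  then have "vnorm S (\<lambda>p. F x p - Ft x p) \<le> vnorm S (F (Q x)) + vnorm S (Ft (Q x))"
    using vnorm_diff[of S "F (Q x)" "Ft (Q x)"] by simp
  also have "\<dots> \<le> 2 * vnorm S (Q x)" using contrD[OF cF, of "Q x"] contrD[OF cFt, of "Q x"] by simp
  finally show ?thesis .
qed


lemma real_key:
  fixes e ea eb ec t :: real
  assumes "0 \<le> e" "e \<le> 1" "0 \<le> ea" "ea \<le> 1" "0 \<le> eb" "eb \<le> 1" "0 \<le> ec" "ec \<le> 1"
    "e \<le> ea + eb + ec + t" "0 \<le> t"
  shows "e\<^sup>2 \<le> 3 * (ea\<^sup>2 + eb\<^sup>2 + ec\<^sup>2) + 4 * t"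
proof -
  define s where "s = ea + eb + ec"
  have s2: "s\<^sup>2 \<le> 3 * (ea\<^sup>2 + eb\<^sup>2 + ec\<^sup>2)"
  proof -
    have "3 * (ea\<^sup>2 + eb\<^sup>2 + ec\<^sup>2) - s\<^sup>2 = (ea-eb)\<^sup>2 + (eb-ec)\<^sup>2 + (ea-ec)\<^sup>2"
      by (simp add: s_def power2_eq_square algebra_simps)
    moreover have "(ea-eb)\<^sup>2 + (eb-ec)\<^sup>2 + (ea-ec)\<^sup>2 \<ge> 0" by simp
    ultimately show ?thesis by linarith
  qed
  show ?thesis
  proof (cases "e \<le> s")
    case True
    then have "e\<^sup>2 \<le> s\<^sup>2" using assms by (intro power_mono) auto
    then show ?thesis using s2 assms by linarith
  next
    case False
    have "e\<^sup>2 - s\<^sup>2 = (e - s) * (e + s)" by (simp add: power2_eq_square algebra_simps)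
    also have "\<dots> \<le> t * 4"
      using False assms unfolding s_def by (intro mult_mono) auto
    finally show ?thesis using s2 by linarith
  qed
qed


lemma contr_lift1: "finite SB \<Longrightarrow> finite SC \<Longrightarrow> (\<And>u. vnorm SB (op_apply SB A u) \<le> vnorm SB u)
   \<Longrightarrow> contr (SB \<times> SC) (lift1 SB A)"
  unfolding contr_def using lift1_bound[of SB SC 1 A] by simp

lemma contr_lift2: "finite SB \<Longrightarrow> finite SC \<Longrightarrow> (\<And>u. vnorm SC (op_apply SC A u) \<le> vnorm SC u)
   \<Longrightarrow> contr (SB \<times> SC) (lift2 SC A)"
  unfolding contr_def using lift2_bound[of SB SC 1 A] by simp

lemma sq_le_ns: "vnorm S x \<le> vnorm S y \<Longrightarrow> (vnorm S x)\<^sup>2 \<le> ns S y"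
  using vnorm_nonneg[of S x] by (metis power_mono vnorm_sq)

lemma pointwise:
  fixes SB SC :: "bidx set" and psi :: "(bidx \<times> bidx) vect"
  assumes SB: "SB = reg_space X m WB" and SC: "SC = reg_space X m WC"
    and fin: "finite X" "finite WB" "finite WC"
    and f: "\<forall>x\<in>X. f x \<in> strings_of_len m" and fz: "\<forall>x\<in>X. fz x \<in> strings_of_len m"
    and agree: "\<And>x. x \<notin> set v \<Longrightarrow> fz x = f x"
    and UB: "is_unitary SB UB" and UC: "is_unitary SC UC"
    and psi: "is_state (SB \<times> SC) psi"
    and PB: "is_projector SB PB" and PC: "is_projector SC PC"
  shows "(vnorm (SB \<times> SC) (op_apply (SB \<times> SC) (tensor PB PC)
            (op_apply (SB \<times> SC) (tensor (op_pow SB (query_op SB UB fz) qB) (op_pow SC (query_op SC UC fz) qC)) psi)))\<^sup>2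
     \<le> 6 * ns (SB \<times> SC) (lift2 SC PC ((lift2 SC (query_op SC UC f) ^^ qC) psi))
      + 3 * ns (SB \<times> SC) (lift1 SB PB ((lift1 SB (query_op SB UB f) ^^ qB) psi))
      + 16 * (\<Sum>k<qB. \<Sum>l<qC. vnorm (SB \<times> SC) (op_apply (SB \<times> SC) (tensor (query_proj SB v) (query_proj SC v))
            (op_apply (SB \<times> SC) (tensor (op_pow SB (query_op SB UB fz) k) (op_pow SC (query_op SC UC fz) l)) psi)))"
proof -
  define S where "S = SB \<times> SC"
  have fB: "finite SB" using SB fin finite_reg_space by blast
  have fC: "finite SC" using SC fin finite_reg_space by blast
  define \<alpha> :: "(bidx \<times> bidx) vect \<Rightarrow> (bidx \<times> bidx) vect" where "\<alpha> = lift1 SB (query_op SB UB fz)"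
  define \<alpha>t :: "(bidx \<times> bidx) vect \<Rightarrow> (bidx \<times> bidx) vect" where "\<alpha>t = lift1 SB (query_op SB UB f)"
  define \<beta> :: "(bidx \<times> bidx) vect \<Rightarrow> (bidx \<times> bidx) vect" where "\<beta> = lift2 SC (query_op SC UC fz)"
  define \<beta>t :: "(bidx \<times> bidx) vect \<Rightarrow> (bidx \<times> bidx) vect" where "\<beta>t = lift2 SC (query_op SC UC f)"
  define Q1 :: "(bidx \<times> bidx) vect \<Rightarrow> (bidx \<times> bidx) vect" where "Q1 = lift1 SB (query_proj SB v)"
  define Q2 :: "(bidx \<times> bidx) vect \<Rightarrow> (bidx \<times> bidx) vect" where "Q2 = lift2 SC (query_proj SC v)"
  define Pw :: "(bidx \<times> bidx) vect \<Rightarrow> (bidx \<times> bidx) vect" where "Pw = (\<lambda>x. lift1 SB PB (lift2 SC PC x))"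
  have c\<alpha>: "contr S \<alpha>" unfolding S_def \<alpha>_def
    by (rule contr_lift1[OF fB fC query_op_contr[OF SB fin(1,2) fz UB]])
  have c\<alpha>t: "contr S \<alpha>t" unfolding S_def \<alpha>t_def
    by (rule contr_lift1[OF fB fC query_op_contr[OF SB fin(1,2) f UB]])
  have c\<beta>: "contr S \<beta>" unfolding S_def \<beta>_def
    by (rule contr_lift2[OF fB fC query_op_contr[OF SC fin(1,3) fz UC]])
  have c\<beta>t: "contr S \<beta>t" unfolding S_def \<beta>t_def
    by (rule contr_lift2[OF fB fC query_op_contr[OF SC fin(1,3) f UC]])
  have cPB: "contr S (lift1 SB PB)" unfolding S_def
    by (rule contr_lift1[OF fB fC projector_contr[OF PB]])
  have cPC: "contr S (lift2 SC PC)" unfolding S_def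
    by (rule contr_lift2[OF fB fC projector_contr[OF PC]])
  have cPw: "contr S Pw" unfolding Pw_def by (rule contr_comp[OF cPB cPC])
  have l\<alpha>: "lin \<alpha>" "lin \<alpha>t" "lin Q1" "lin (lift1 SB PB)" unfolding \<alpha>_def \<alpha>t_def Q1_def by (rule lin_lift1)+
  have l\<beta>: "lin \<beta>" "lin \<beta>t" "lin Q2" "lin (lift2 SC PC)" unfolding \<beta>_def \<beta>t_def Q2_def by (rule lin_lift2)+
  have lPw: "lin Pw" unfolding Pw_def lin_def
    by (intro allI) (simp only: linD[OF l\<beta>(4)] linD[OF l\<alpha>(4)])
  have cm: "\<And>A B x. lift1 SB A (lift2 SC B x) = lift2 SC B (lift1 SB A x)" by (rule lift_comm)
  have psi0: "\<And>b c. (b, c) \<notin> SB \<times> SC \<Longrightarrow> psi (b, c) = 0" using psi unfolding is_state_def by blast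
  have psin: "vnorm S psi = 1" using psi unfolding is_state_def S_def by blast
  have T: "op_apply S (tensor (op_pow SB (query_op SB UB fz) k) (op_pow SC (query_op SC UC fz) l)) psi
      = (\<alpha> ^^ k) ((\<beta> ^^ l) psi)" for k l
  proof -
    have i2: "lift2 SC (op_id SC) psi = psi" using psi0 by (intro lift2_id[OF fC]) auto
    have i1: "lift1 SB (op_id SB) psi = psi" using psi0 by (intro lift1_id[OF fB]) auto
    have "lift1 SB (op_id SB) ((\<beta> ^^ l) psi) = (\<beta> ^^ l) (lift1 SB (op_id SB) psi)"
      unfolding \<beta>_def by (rule comm_pow) (rule cm)
    then show ?thesis
      unfolding S_def tensor_lift[OF fB fC] lift1_pow lift2_pow i2 \<alpha>_def \<beta>_def
      by (simp add: i1 \<beta>_def)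
  qed
  have PT: "op_apply S (tensor (query_proj SB v) (query_proj SC v)) x = Q1 (Q2 x)" for x
    unfolding S_def tensor_lift[OF fB fC] Q1_def Q2_def ..
  have PP: "op_apply S (tensor PB PC) x = Pw x" for x
    unfolding S_def tensor_lift[OF fB fC] Pw_def ..
  have DA: "vnorm S (\<lambda>p. \<alpha> x p - \<alpha>t x p) \<le> 2 * vnorm S (Q1 x)" for x
    by (rule diff_bound[OF l\<alpha>(1,2) c\<alpha> c\<alpha>t]) (unfold \<alpha>_def \<alpha>t_def Q1_def, rule lift1_agree[OF agree fB])
  have DB: "vnorm S (\<lambda>p. \<beta> x p - \<beta>t x p) \<le> 2 * vnorm S (Q2 x)" for x
    by (rule diff_bound[OF l\<beta>(1,2) c\<beta> c\<beta>t]) (unfold \<beta>_def \<beta>t_def Q2_def, rule lift2_agree[OF agree fC])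
  define n where "n = (\<lambda>k l. vnorm S (Q1 (Q2 ((\<alpha> ^^ k) ((\<beta> ^^ l) psi)))))"
  define \<phi> where "\<phi> = (\<alpha> ^^ qB) ((\<beta> ^^ qC) psi)"
  define a where "a = (\<alpha> ^^ qB) ((\<beta>t ^^ qC) psi)"
  define b where "b = (\<alpha>t ^^ qB) ((\<beta> ^^ qC) psi)"
  define c where "c = (\<alpha>t ^^ qB) ((\<beta>t ^^ qC) psi)"
  define y where "y = (\<lambda>p. (\<beta> ^^ qC) psi p - (\<beta>t ^^ qC) psi p)"
  define d where "d = (\<lambda>p. (\<phi> p - a p) - (b p - c p))"
  have d_eq: "d = (\<lambda>p. (\<alpha> ^^ qB) y p - (\<alpha>t ^^ qB) y p)"
    unfolding d_def y_def \<phi>_def a_def b_def c_def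
    using linD[OF lin_pow[OF l\<alpha>(1)]] linD[OF lin_pow[OF l\<alpha>(2)]] by simp
  have dA: "vnorm S d \<le> (\<Sum>k<qB. 2 * vnorm S (Q1 ((\<alpha> ^^ k) y)))"
    unfolding d_eq by (rule tele[OF l\<alpha>(2) c\<alpha>t DA])
  have dB: "vnorm S (Q1 ((\<alpha> ^^ k) y)) \<le> (\<Sum>l<qC. 2 * n k l)" for k
  proof -
    have c1: "Q1 ((\<alpha> ^^ k) ((G ^^ qC) psi)) = (G ^^ qC) (Q1 ((\<alpha> ^^ k) psi))"
      if "G = \<beta> \<or> G = \<beta>t" for G
    proof -
      have g: "\<And>A x. lift1 SB A (G x) = G (lift1 SB A x)"
        using that unfolding \<beta>_def \<beta>t_def by (auto simp: cm)
      have "(\<alpha> ^^ k) ((G ^^ qC) psi) = (G ^^ qC) ((\<alpha> ^^ k) psi)"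
        by (rule comm_pow2) (unfold \<alpha>_def, rule g)
      moreover have "Q1 ((G ^^ qC) x) = (G ^^ qC) (Q1 x)" for x
        by (rule comm_pow) (unfold Q1_def, rule g)
      ultimately show ?thesis by simp
    qed
    have e1: "Q1 ((\<alpha> ^^ k) y) = (\<lambda>p. (\<beta> ^^ qC) (Q1 ((\<alpha> ^^ k) psi)) p - (\<beta>t ^^ qC) (Q1 ((\<alpha> ^^ k) psi)) p)"
      unfolding y_def linD[OF lin_pow[OF l\<alpha>(1)]] linD[OF l\<alpha>(3)] using c1 by simp
    have "vnorm S (Q1 ((\<alpha> ^^ k) y)) \<le> (\<Sum>l<qC. 2 * vnorm S (Q2 ((\<beta> ^^ l) (Q1 ((\<alpha> ^^ k) psi)))))"
      unfolding e1 by (rule tele[OF l\<beta>(2) c\<beta>t DB])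
    also have "\<dots> = (\<Sum>l<qC. 2 * n k l)"
    proof (intro sum.cong refl)
      fix l
      have g: "\<And>x. Q1 (\<beta> x) = \<beta> (Q1 x)" unfolding Q1_def \<beta>_def by (rule cm)
      have g2: "\<And>x. \<alpha> (\<beta> x) = \<beta> (\<alpha> x)" unfolding \<alpha>_def \<beta>_def by (rule cm)
      have "(\<beta> ^^ l) (Q1 x) = Q1 ((\<beta> ^^ l) x)" for x by (rule comm_pow[symmetric]) (rule g)
      moreover have "(\<beta> ^^ l) ((\<alpha> ^^ k) psi) = (\<alpha> ^^ k) ((\<beta> ^^ l) psi)" by (rule comm_pow2[symmetric]) (rule g2)
      moreover have "Q2 (Q1 x) = Q1 (Q2 x)" for x unfolding Q1_def Q2_def by (rule cm[symmetric])
      ultimately show "2 * vnorm S (Q2 ((\<beta> ^^ l) (Q1 ((\<alpha> ^^ k) psi)))) = 2 * n k l"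
        unfolding n_def by simp
    qed
    finally show ?thesis .
  qed
  have dn: "vnorm S d \<le> 4 * (\<Sum>k<qB. \<Sum>l<qC. n k l)"
  proof -
    have "vnorm S d \<le> (\<Sum>k<qB. 2 * (\<Sum>l<qC. 2 * n k l))"
      using dA dB by (meson mult_left_mono order_trans sum_mono zero_le_numeral)
    also have "\<dots> = 4 * (\<Sum>k<qB. \<Sum>l<qC. n k l)" by (simp add: sum_distrib_left)
    finally show ?thesis .
  qed
  have Pd: "Pw d = (\<lambda>p. (Pw \<phi> p - Pw a p) - (Pw b p - Pw c p))"
    unfolding d_def linD[OF lPw] ..
  have Pphi: "Pw \<phi> = (\<lambda>p. ((Pw d p + Pw a p) + Pw b p) - Pw c p)"
    unfolding Pd by (auto simp: algebra_simps)
  have e_le: "vnorm S (Pw \<phi>) \<le> vnorm S (Pw a) + vnorm S (Pw b) + vnorm S (Pw c) + vnorm S (Pw d)"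
  proof -
    have "vnorm S (Pw \<phi>) \<le> vnorm S (\<lambda>p. (Pw d p + Pw a p) + Pw b p) + vnorm S (Pw c)"
      unfolding Pphi by (rule vnorm_diff)
    also have "\<dots> \<le> (vnorm S (Pw d) + vnorm S (Pw a)) + vnorm S (Pw b) + vnorm S (Pw c)"
      using vnorm_triangle[of S "\<lambda>p. Pw d p + Pw a p" "Pw b"] vnorm_triangle[of S "Pw d" "Pw a"] by simp
    finally show ?thesis by simp
  qed
  have one: "vnorm S (Pw ((F ^^ qB) ((G ^^ qC) psi))) \<le> 1" if "contr S F" "contr S G" for F G
  proof -
    have "vnorm S (Pw ((F ^^ qB) ((G ^^ qC) psi))) \<le> vnorm S ((F ^^ qB) ((G ^^ qC) psi))" by (rule contrD[OF cPw])
    also have "\<dots> \<le> vnorm S ((G ^^ qC) psi)" by (rule contrD[OF contr_pow[OF that(1)]])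
    also have "\<dots> \<le> vnorm S psi" by (rule contrD[OF contr_pow[OF that(2)]])
    finally show ?thesis using psin by simp
  qed
  have e1: "vnorm S (Pw \<phi>) \<le> 1" unfolding \<phi>_def by (rule one[OF c\<alpha> c\<beta>])
  have a1: "vnorm S (Pw a) \<le> 1" unfolding a_def by (rule one[OF c\<alpha> c\<beta>t])
  have b1: "vnorm S (Pw b) \<le> 1" unfolding b_def by (rule one[OF c\<alpha>t c\<beta>])
  have c1: "vnorm S (Pw c) \<le> 1" unfolding c_def by (rule one[OF c\<alpha>t c\<beta>t])
  have key: "(vnorm S (Pw \<phi>))\<^sup>2 \<le> 3 * ((vnorm S (Pw a))\<^sup>2 + (vnorm S (Pw b))\<^sup>2 + (vnorm S (Pw c))\<^sup>2) + 4 * vnorm S (Pw d)"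
    using e_le e1 a1 b1 c1 by (intro real_key) (auto simp: vnorm_nonneg)
  have hA: "(vnorm S (Pw ((F ^^ qB) ((\<beta>t ^^ qC) psi))))\<^sup>2 \<le> ns S (lift2 SC PC ((\<beta>t ^^ qC) psi))"
    if "F = \<alpha> \<or> F = \<alpha>t" for F
  proof (rule sq_le_ns)
    have cF: "contr S F" using that c\<alpha> c\<alpha>t by auto
    have g: "lift2 SC PC (F x) = F (lift2 SC PC x)" for x
    proof (cases "F = \<alpha>")
      case True then show ?thesis unfolding \<alpha>_def by (simp only: cm)
    next
      case False then have "F = \<alpha>t" using that by simp
      then show ?thesis unfolding \<alpha>t_def by (simp only: cm)
    qed
    have eq: "lift2 SC PC ((F ^^ qB) ((\<beta>t ^^ qC) psi)) = (F ^^ qB) (lift2 SC PC ((\<beta>t ^^ qC) psi))"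
      by (rule comm_pow) (rule g)
    have "vnorm S (Pw ((F ^^ qB) ((\<beta>t ^^ qC) psi))) \<le> vnorm S (lift2 SC PC ((F ^^ qB) ((\<beta>t ^^ qC) psi)))"
      unfolding Pw_def by (rule contrD[OF cPB])
    also have "\<dots> = vnorm S ((F ^^ qB) (lift2 SC PC ((\<beta>t ^^ qC) psi)))"
      unfolding eq ..
    also have "\<dots> \<le> vnorm S (lift2 SC PC ((\<beta>t ^^ qC) psi))" by (rule contrD[OF contr_pow[OF cF]])
    finally show "vnorm S (Pw ((F ^^ qB) ((\<beta>t ^^ qC) psi))) \<le> vnorm S (lift2 SC PC ((\<beta>t ^^ qC) psi))" .
  qed
  have hB: "(vnorm S (Pw b))\<^sup>2 \<le> ns S (lift1 SB PB ((\<alpha>t ^^ qB) psi))"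
  proof (rule sq_le_ns)
    have g: "\<And>x. lift1 SB PB (\<beta> x) = \<beta> (lift1 SB PB x)" unfolding \<beta>_def by (rule cm)
    have g2: "\<And>x. \<alpha>t (\<beta> x) = \<beta> (\<alpha>t x)" unfolding \<alpha>t_def \<beta>_def by (rule cm)
    have eq: "lift1 SB PB b = (\<beta> ^^ qC) (lift1 SB PB ((\<alpha>t ^^ qB) psi))"
      unfolding b_def comm_pow2[of \<alpha>t \<beta>, OF g2] by (rule comm_pow) (rule g)
    have "vnorm S (Pw b) = vnorm S (lift2 SC PC (lift1 SB PB b))" unfolding Pw_def by (simp only: cm)
    also have "\<dots> \<le> vnorm S (lift1 SB PB b)" by (rule contrD[OF cPC])
    also have "\<dots> = vnorm S ((\<beta> ^^ qC) (lift1 SB PB ((\<alpha>t ^^ qB) psi)))" unfolding eq ..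
    also have "\<dots> \<le> vnorm S (lift1 SB PB ((\<alpha>t ^^ qB) psi))" by (rule contrD[OF contr_pow[OF c\<beta>]])
    finally show "vnorm S (Pw b) \<le> vnorm S (lift1 SB PB ((\<alpha>t ^^ qB) psi))" .
  qed
  have Pdd: "vnorm S (Pw d) \<le> vnorm S d" by (rule contrD[OF cPw])
  have main: "(vnorm S (Pw \<phi>))\<^sup>2 \<le> 6 * ns S (lift2 SC PC ((\<beta>t ^^ qC) psi))
      + 3 * ns S (lift1 SB PB ((\<alpha>t ^^ qB) psi)) + 16 * (\<Sum>k<qB. \<Sum>l<qC. n k l)"
    using key hA[of \<alpha>] hA[of \<alpha>t] hB Pdd dn unfolding a_def c_def by simp
  have sumeq: "(\<Sum>k<qB. \<Sum>l<qC. n k l) = (\<Sum>k<qB. \<Sum>l<qC. vnorm S (op_apply S (tensor (query_proj SB v) (query_proj SC v))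
            (op_apply S (tensor (op_pow SB (query_op SB UB fz) k) (op_pow SC (query_op SC UC fz) l)) psi)))"
    unfolding n_def T PT ..
  have L: "op_apply S (tensor PB PC) (op_apply S (tensor (op_pow SB (query_op SB UB fz) qB) (op_pow SC (query_op SC UC fz) qC)) psi) = Pw \<phi>"
    unfolding PP T \<phi>_def ..
  have final: "(vnorm S (op_apply S (tensor PB PC) (op_apply S (tensor (op_pow SB (query_op SB UB fz) qB) (op_pow SC (query_op SC UC fz) qC)) psi)))\<^sup>2
     \<le> 6 * ns S (lift2 SC PC ((lift2 SC (query_op SC UC f) ^^ qC) psi))
      + 3 * ns S (lift1 SB PB ((lift1 SB (query_op SB UB f) ^^ qB) psi))
      + 16 * (\<Sum>k<qB. \<Sum>l<qC. vnorm S (op_apply S (tensor (query_proj SB v) (query_proj SC v))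
            (op_apply S (tensor (op_pow SB (query_op SB UB fz) k) (op_pow SC (query_op SC UC fz) l)) psi)))"
    unfolding L sumeq[symmetric] using main unfolding \<alpha>t_def \<beta>t_def .
  show ?thesis using final unfolding S_def .
qed


lemma pmax_bound:
  fixes Z :: "'z pmf" and g :: "'z \<Rightarrow> 'w" and h :: "'w \<Rightarrow> real"
  assumes R: "\<And>z. z \<in> set_pmf Z \<Longrightarrow> g z \<in> R"
    and h0: "\<And>w. h w \<ge> 0"
    and hs: "\<And>W. finite W \<Longrightarrow> W \<subseteq> R \<Longrightarrow> sum h W \<le> 1"
  shows "measure_pmf.expectation Z (\<lambda>z. h (g z)) \<le> Sup ((\<lambda>w. measure_pmf.prob Z {z. g z = w}) ` R)"
proof -
  define \<mu> where "\<mu> = map_pmf g Z"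
  define pm where "pm = Sup ((\<lambda>w. measure_pmf.prob Z {z. g z = w}) ` R)"
  have bdd: "bdd_above ((\<lambda>w. measure_pmf.prob Z {z. g z = w}) ` R)"
    by (rule bdd_aboveI[of _ 1]) auto
  have pmf_le: "pmf \<mu> w \<le> pm" if "w \<in> R" for w
  proof -
    have "pmf \<mu> w = measure_pmf.prob Z {z. g z = w}" unfolding \<mu>_def pmf_map by (simp add: vimage_def)
    also have "\<dots> \<le> pm" unfolding pm_def using that bdd by (intro cSup_upper) auto
    finally show ?thesis .
  qed
  obtain z0 where "z0 \<in> set_pmf Z" using set_pmf_not_empty[of Z] by blast
  then have "g z0 \<in> R" by (rule R)
  then have pm0: "pm \<ge> 0" using pmf_le[of "g z0"] pmf_nonneg[of \<mu> "g z0"] by linarith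
  have supp: "w \<in> R" if "pmf \<mu> w \<noteq> 0" for w
  proof -
    have "w \<in> set_pmf \<mu>" using that by (simp add: set_pmf_iff)
    then show ?thesis unfolding \<mu>_def using R by auto
  qed
  have h1: "h w \<le> 1" if "w \<in> R" for w using hs[of "{w}"] that by simp
  have bound: "norm (pmf \<mu> w * h w) \<le> pmf \<mu> w" for w
  proof (cases "pmf \<mu> w = 0")
    case True then show ?thesis by simp
  next
    case False
    then have "w \<in> R" by (rule supp)
    then show ?thesis using h1[of w] h0[of w] pmf_nonneg[of \<mu> w]
      by (simp add: abs_mult mult_left_le)
  qed
  have abs: "Infinite_Set_Sum.abs_summable_on (\<lambda>w. pmf \<mu> w * h w) UNIV"
    by (rule abs_summable_on_comparison_test'[OF pmf_abs_summable bound])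
  have summ: "(\<lambda>w. pmf \<mu> w * h w) summable_on UNIV"
    using abs abs_summable_equivalent abs_summable_summable by blast
  have "measure_pmf.expectation Z (\<lambda>z. h (g z)) = measure_pmf.expectation \<mu> h"
    unfolding \<mu>_def by simp
  also have "\<dots> = infsetsum (\<lambda>w. pmf \<mu> w * h w) UNIV" by (rule pmf_expectation_eq_infsetsum)
  also have "\<dots> = infsum (\<lambda>w. pmf \<mu> w * h w) UNIV" by (rule infsetsum_infsum[OF abs])
  also have "\<dots> \<le> pm"
  proof (rule infsum_le_finite_sums[OF summ])
    fix F :: "'w set" assume F: "finite F"
    have "(\<Sum>w\<in>F. pmf \<mu> w * h w) = (\<Sum>w\<in>F \<inter> R. pmf \<mu> w * h w)"
      using F supp by (intro sum.mono_neutral_right) auto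
    also have "\<dots> \<le> (\<Sum>w\<in>F \<inter> R. pm * h w)"
      using pmf_le h0 by (intro sum_mono mult_right_mono) auto
    also have "\<dots> = pm * sum h (F \<inter> R)" by (simp add: sum_distrib_left)
    also have "\<dots> \<le> pm * 1" using hs[of "F \<inter> R"] F pm0 by (intro mult_left_mono) auto
    finally show "(\<Sum>w\<in>F. pmf \<mu> w * h w) \<le> pm" by simp
  qed
  finally show ?thesis unfolding pm_def .
qed


lemma op_pow_contr:
  assumes fin: "finite S" and A: "\<And>u. vnorm S (op_apply S A u) \<le> vnorm S u"
  shows "vnorm S (op_apply S (op_pow S A k) u) \<le> vnorm S u"
proof (induction k arbitrary: u)
  case 0
  have "vnorm S (op_apply S (op_id S) u) = vnorm S u"
    unfolding op_apply_id[OF fin] by (rule vnorm_cong) simp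
  then show ?case by simp
next
  case (Suc k)
  have "vnorm S (op_apply S (op_pow S A (Suc k)) u) = vnorm S (op_apply S A (op_apply S (op_pow S A k) u))"
    by (simp add: op_apply_mult)
  also have "\<dots> \<le> vnorm S (op_apply S (op_pow S A k) u)" by (rule A)
  also have "\<dots> \<le> vnorm S u" by (rule Suc)
  finally show ?case .
qed

lemma tensor_contr:
  assumes fB: "finite SB" and fC: "finite SC"
    and A: "\<And>u. vnorm SB (op_apply SB A u) \<le> vnorm SB u"
    and B: "\<And>u. vnorm SC (op_apply SC B u) \<le> vnorm SC u"
  shows "vnorm (SB \<times> SC) (op_apply (SB \<times> SC) (tensor A B) x) \<le> vnorm (SB \<times> SC) x"
proof -
  have "vnorm (SB \<times> SC) (op_apply (SB \<times> SC) (tensor A B) x) = vnorm (SB \<times> SC) (lift1 SB A (lift2 SC B x))"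
    unfolding tensor_lift[OF fB fC] ..
  also have "\<dots> \<le> vnorm (SB \<times> SC) (lift2 SC B x)" by (rule contrD[OF contr_lift1[OF fB fC A]])
  also have "\<dots> \<le> vnorm (SB \<times> SC) x" by (rule contrD[OF contr_lift2[OF fB fC B]])
  finally show ?thesis .
qed

lemma query_proj_contr:
  assumes "finite S" shows "vnorm S (op_apply S (query_proj S v) u) \<le> vnorm S u"
proof (rule vnorm_mono_ns)
  show "ns S (op_apply S (query_proj S v) u) \<le> ns S u"
    unfolding ns_def query_proj_apply[OF assms] by (intro sum_mono) auto
qed

lemma sumA:
  fixes SB SC :: "bidx set" and psi :: "(bidx \<times> bidx) vect"
  assumes SC: "SC = reg_space X m WC" and fB: "finite SB" and fin: "finite X" "finite WC"
    and f: "\<forall>x\<in>X. f x \<in> strings_of_len m" and UC: "is_unitary SC UC"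
    and psi: "is_state (SB \<times> SC) psi"
    and proj: "\<And>w. w \<in> R \<Longrightarrow> is_projector SC (P w)"
    and orth: "\<And>w w'. w \<in> R \<Longrightarrow> w' \<in> R \<Longrightarrow> w \<noteq> w' \<Longrightarrow> op_mult SC (P w) (P w') = (\<lambda>_ _. 0)"
    and W: "finite W" "W \<subseteq> R"
  shows "(\<Sum>w\<in>W. ns (SB \<times> SC) (lift2 SC (P w) ((lift2 SC (query_op SC UC f) ^^ q) psi))) \<le> 1"
proof -
  have fC: "finite SC" using SC fin finite_reg_space by blast
  have c: "contr (SB \<times> SC) (lift2 SC (query_op SC UC f))"
    by (rule contr_lift2[OF fB fC query_op_contr[OF SC fin f UC]])
  have "(\<Sum>w\<in>W. ns (SB \<times> SC) (lift2 SC (P w) ((lift2 SC (query_op SC UC f) ^^ q) psi)))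
      \<le> ns (SB \<times> SC) ((lift2 SC (query_op SC UC f) ^^ q) psi)"
    using W by (intro lift2_sumbound[OF fB fC W(1)] orth_sum[OF fC W(1)] proj orth) auto
  also have "\<dots> \<le> ns (SB \<times> SC) psi"
    using contrD[OF contr_pow[OF c]] vnorm_nonneg by (metis power_mono vnorm_sq)
  also have "\<dots> = 1" using psi unfolding is_state_def by (metis one_power2 vnorm_sq)
  finally show ?thesis .
qed

lemma sumB:
  fixes SB SC :: "bidx set" and psi :: "(bidx \<times> bidx) vect"
  assumes SB: "SB = reg_space X m WB" and fC: "finite SC" and fin: "finite X" "finite WB"
    and f: "\<forall>x\<in>X. f x \<in> strings_of_len m" and UB: "is_unitary SB UB"
    and psi: "is_state (SB \<times> SC) psi"
    and proj: "\<And>w. w \<in> R \<Longrightarrow> is_projector SB (P w)"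
    and orth: "\<And>w w'. w \<in> R \<Longrightarrow> w' \<in> R \<Longrightarrow> w \<noteq> w' \<Longrightarrow> op_mult SB (P w) (P w') = (\<lambda>_ _. 0)"
    and W: "finite W" "W \<subseteq> R"
  shows "(\<Sum>w\<in>W. ns (SB \<times> SC) (lift1 SB (P w) ((lift1 SB (query_op SB UB f) ^^ q) psi))) \<le> 1"
proof -
  have fB: "finite SB" using SB fin finite_reg_space by blast
  have c: "contr (SB \<times> SC) (lift1 SB (query_op SB UB f))"
    by (rule contr_lift1[OF fB fC query_op_contr[OF SB fin f UB]])
  have "(\<Sum>w\<in>W. ns (SB \<times> SC) (lift1 SB (P w) ((lift1 SB (query_op SB UB f) ^^ q) psi)))
      \<le> ns (SB \<times> SC) ((lift1 SB (query_op SB UB f) ^^ q) psi)"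
    using W by (intro lift1_sumbound[OF fB fC W(1)] orth_sum[OF fB W(1)] proj orth) auto
  also have "\<dots> \<le> ns (SB \<times> SC) psi"
    using contrD[OF contr_pow[OF c]] vnorm_nonneg by (metis power_mono vnorm_sq)
  also have "\<dots> = 1" using psi unfolding is_state_def by (metis one_power2 vnorm_sq)
  finally show ?thesis .
qed

lemma int_pmf: "AE x in measure_pmf p. \<bar>h x\<bar> \<le> B \<Longrightarrow> integrable (measure_pmf p) (h :: 'a \<Rightarrow> real)"
  by (rule measure_pmf.integrable_const_bound[where B=B]) auto

lemma jensen_pmf:
  fixes h :: "'a \<Rightarrow> real"
  assumes "AE x in measure_pmf p. \<bar>h x\<bar> \<le> B"
  shows "measure_pmf.expectation p h \<le> sqrt (measure_pmf.expectation p (\<lambda>x. (h x)\<^sup>2))"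
proof -
  have i1: "integrable (measure_pmf p) h" by (rule int_pmf[OF assms])
  have i2: "integrable (measure_pmf p) (\<lambda>x. (h x)\<^sup>2)"
  proof (rule int_pmf[where B="B\<^sup>2"])
    show "AE x in measure_pmf p. \<bar>(h x)\<^sup>2\<bar> \<le> B\<^sup>2"
      using assms
    proof eventually_elim
      fix x assume a: "\<bar>h x\<bar> \<le> B"
      have "\<bar>h x\<bar>\<^sup>2 \<le> B\<^sup>2" using a by (intro power_mono) auto
      then show "\<bar>(h x)\<^sup>2\<bar> \<le> B\<^sup>2" by simp
    qed
  qed
  have "0 \<le> measure_pmf.variance p h" by (rule measure_pmf.variance_positive)
  then have "(measure_pmf.expectation p h)\<^sup>2 \<le> measure_pmf.expectation p (\<lambda>x. (h x)\<^sup>2)"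
    using measure_pmf.variance_eq[OF i1 i2] by simp
  then show ?thesis by (rule real_le_rsqrt)
qed


lemma unif_exp: "0 < q \<Longrightarrow> measure_pmf.expectation (pmf_of_set {..<q}) h = (\<Sum>k<q. h k) / real q"
  by (subst integral_pmf_of_set) auto

lemma jensen_sqrt:
  fixes h :: "'a \<Rightarrow> real"
  assumes "AE x in measure_pmf p. 0 \<le> h x \<and> h x \<le> B"
  shows "measure_pmf.expectation p (\<lambda>x. sqrt (h x)) \<le> sqrt (measure_pmf.expectation p h)"
proof -
  have "measure_pmf.expectation p (\<lambda>x. sqrt (h x)) \<le> sqrt (measure_pmf.expectation p (\<lambda>x. (sqrt (h x))\<^sup>2))"
  proof (rule jensen_pmf[where B="sqrt B"])
    show "AE x in measure_pmf p. \<bar>sqrt (h x)\<bar> \<le> sqrt B" using assms by eventually_elim auto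
  qed
  also have "measure_pmf.expectation p (\<lambda>x. (sqrt (h x))\<^sup>2) = measure_pmf.expectation p h"
    using assms by (intro integral_cong_AE) (auto elim!: eventually_mono)
  finally show ?thesis .
qed

lemma exp_mono:
  fixes h1 h2 :: "'a \<Rightarrow> real"
  assumes "AE x in measure_pmf p. h1 x \<le> h2 x"
    and "AE x in measure_pmf p. \<bar>h1 x\<bar> \<le> Ba" "AE x in measure_pmf p. \<bar>h2 x\<bar> \<le> Bb"
  shows "measure_pmf.expectation p h1 \<le> measure_pmf.expectation p h2"
  by (rule integral_mono_AE[OF int_pmf[OF assms(2)] int_pmf[OF assms(3)] assms(1)])


lemma exp_bounds:
  fixes h :: "'a \<Rightarrow> real"
  assumes "AE x in measure_pmf p. 0 \<le> h x \<and> h x \<le> B" and B: "0 \<le> B"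
  shows "0 \<le> measure_pmf.expectation p h \<and> measure_pmf.expectation p h \<le> B"
proof
  have "AE x in measure_pmf p. 0 \<le> h x" using assms(1) by eventually_elim auto
  then show "0 \<le> measure_pmf.expectation p h" by (rule integral_nonneg_AE)
  have "measure_pmf.expectation p h \<le> measure_pmf.expectation p (\<lambda>_. B)"
  proof (rule exp_mono[where Ba=B and Bb=B])
    show "AE x in measure_pmf p. h x \<le> B" using assms(1) by eventually_elim auto
    show "AE x in measure_pmf p. \<bar>h x\<bar> \<le> B" using assms(1) by eventually_elim auto
    show "AE x in measure_pmf p. \<bar>B\<bar> \<le> B" using B by simp
  qed
  then show "measure_pmf.expectation p h \<le> B" by simp
qed

lemma main_bound:
  fixes F :: "(bs \<Rightarrow> bs) pmf" and Z :: "bs list pmf" and g :: "bs list \<Rightarrow> bs"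
    and psi :: "(bidx \<times> bidx) vect" and SB SC :: "bidx set" and PiB PiC :: "bs \<Rightarrow> bidx oper"
  assumes SB: "SB = reg_space X m WB" and SC: "SC = reg_space X m WC"
    and fin: "finite X" "finite WB" "finite WC"
    and fF: "\<And>f. f \<in> set_pmf F \<Longrightarrow> \<forall>x\<in>X. f x \<in> strings_of_len m"
    and fZ: "\<And>z. z \<in> set_pmf Z \<Longrightarrow> set z \<subseteq> strings_of_len m"
    and gR: "\<And>z. z \<in> set_pmf Z \<Longrightarrow> g z \<in> R"
    and UB: "is_unitary SB UB" and UC: "is_unitary SC UC"
    and psi: "is_state (SB \<times> SC) psi"
    and qB: "0 < qB" and qC: "0 < qC"
    and projB: "\<And>w. w \<in> R \<Longrightarrow> is_projector SB (PiB w)"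
    and projC: "\<And>w. w \<in> R \<Longrightarrow> is_projector SC (PiC w)"
    and orthB: "\<And>w w'. w \<in> R \<Longrightarrow> w' \<in> R \<Longrightarrow> w \<noteq> w' \<Longrightarrow> op_mult SB (PiB w) (PiB w') = (\<lambda>_ _. 0)"
    and orthC: "\<And>w w'. w \<in> R \<Longrightarrow> w' \<in> R \<Longrightarrow> w \<noteq> w' \<Longrightarrow> op_mult SC (PiC w) (PiC w') = (\<lambda>_ _. 0)"
  shows "measure_pmf.expectation F (\<lambda>f. measure_pmf.expectation Z (\<lambda>z.
        (vnorm (SB \<times> SC) (op_apply (SB \<times> SC) (tensor (PiB (g z)) (PiC (g z)))
          (op_apply (SB \<times> SC) (tensor (op_pow SB (query_op SB UB (reprogram f v z)) qB)
                              (op_pow SC (query_op SC UC (reprogram f v z)) qC)) psi)))\<^sup>2))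
    \<le> 9 * Sup ((\<lambda>w. measure_pmf.prob Z {z. g z = w}) ` R)
      + 16 * real qB * real qC *
        sqrt (measure_pmf.expectation (pmf_of_set {..<qB}) (\<lambda>k.
              measure_pmf.expectation (pmf_of_set {..<qC}) (\<lambda>l.
              measure_pmf.expectation F (\<lambda>f. measure_pmf.expectation Z (\<lambda>z.
                (vnorm (SB \<times> SC) (op_apply (SB \<times> SC) (tensor (query_proj SB v) (query_proj SC v))
                  (op_apply (SB \<times> SC) (tensor (op_pow SB (query_op SB UB (reprogram f v z)) k)
                                      (op_pow SC (query_op SC UC (reprogram f v z)) l)) psi)))\<^sup>2)))))"
proof -
  define S where "S = SB \<times> SC"
  have fB: "finite SB" using SB fin finite_reg_space by blast
  have fC: "finite SC" using SC fin finite_reg_space by blast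
  define L where "L = (\<lambda>f z. (vnorm S (op_apply S (tensor (PiB (g z)) (PiC (g z)))
          (op_apply S (tensor (op_pow SB (query_op SB UB (reprogram f v z)) qB)
                              (op_pow SC (query_op SC UC (reprogram f v z)) qC)) psi)))\<^sup>2)"
  define n where "n = (\<lambda>f z k l. vnorm S (op_apply S (tensor (query_proj SB v) (query_proj SC v))
                  (op_apply S (tensor (op_pow SB (query_op SB UB (reprogram f v z)) k)
                                      (op_pow SC (query_op SC UC (reprogram f v z)) l)) psi)))"
  define hA where "hA = (\<lambda>f w. ns S (lift2 SC (PiC w) ((lift2 SC (query_op SC UC f) ^^ qC) psi)))"
  define hB where "hB = (\<lambda>f w. ns S (lift1 SB (PiB w) ((lift1 SB (query_op SB UB f) ^^ qB) psi)))"
  define pm where "pm = Sup ((\<lambda>w. measure_pmf.prob Z {z. g z = w}) ` R)"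
  have psin: "vnorm S psi = 1" using psi unfolding is_state_def S_def by blast
  have fz_ok: "\<forall>x\<in>X. reprogram f v z x \<in> strings_of_len m" if "f \<in> set_pmf F" "z \<in> set_pmf Z" for f z
    using fF[OF that(1)] fZ[OF that(2)] by (auto intro: reprogram_len)
  have agree: "\<And>x. x \<notin> set v \<Longrightarrow> reprogram f v z x = f x" for f z by (rule reprogram_out)
  have pw: "L f z \<le> 6 * hA f (g z) + 3 * hB f (g z) + 16 * (\<Sum>k<qB. \<Sum>l<qC. n f z k l)"
    if "f \<in> set_pmf F" "z \<in> set_pmf Z" for f z
    unfolding L_def hA_def hB_def n_def S_def
    by (rule pointwise[OF SB SC fin fF[OF that(1)] fz_ok[OF that] agree UB UC psi projB[OF gR[OF that(2)]] projC[OF gR[OF that(2)]]])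
  have cAB: "vnorm S (op_apply S (tensor (op_pow SB (query_op SB UB (reprogram f v z)) k)
                                      (op_pow SC (query_op SC UC (reprogram f v z)) l)) psi) \<le> 1"
    if "f \<in> set_pmf F" "z \<in> set_pmf Z" for f z k l
    using tensor_contr[OF fB fC op_pow_contr[OF fB query_op_contr[OF SB fin(1,2) fz_ok[OF that] UB]]
       op_pow_contr[OF fC query_op_contr[OF SC fin(1,3) fz_ok[OF that] UC]]] psin unfolding S_def by metis
  have n01: "0 \<le> n f z k l \<and> n f z k l \<le> 1" if "f \<in> set_pmf F" "z \<in> set_pmf Z" for f z k l
  proof
    show "0 \<le> n f z k l" unfolding n_def by (rule vnorm_nonneg)
    show "n f z k l \<le> 1" unfolding n_def
      using tensor_contr[OF fB fC query_proj_contr[OF fB] query_proj_contr[OF fC]] cAB[OF that, of k l]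
      unfolding S_def by (meson order_trans)
  qed
  have L01: "0 \<le> L f z \<and> L f z \<le> 1" if "f \<in> set_pmf F" "z \<in> set_pmf Z" for f z
  proof -
    have "vnorm S (op_apply S (tensor (PiB (g z)) (PiC (g z)))
          (op_apply S (tensor (op_pow SB (query_op SB UB (reprogram f v z)) qB)
                              (op_pow SC (query_op SC UC (reprogram f v z)) qC)) psi)) \<le> 1"
      using tensor_contr[OF fB fC projector_contr[OF projB[OF gR[OF that(2)]]] projector_contr[OF projC[OF gR[OF that(2)]]]]
        cAB[OF that, of qB qC] unfolding S_def by (meson order_trans)
    then show ?thesis unfolding L_def using vnorm_nonneg by (auto intro: power_le_one)
  qed
  have hAsum: "sum (hA f) W \<le> 1" if "f \<in> set_pmf F" "finite W" "W \<subseteq> R" for f W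
    unfolding hA_def S_def by (rule sumA[OF SC fB fin(1,3) fF[OF that(1)] UC psi projC orthC that(2,3)])
  have hBsum: "sum (hB f) W \<le> 1" if "f \<in> set_pmf F" "finite W" "W \<subseteq> R" for f W
    unfolding hB_def S_def by (rule sumB[OF SB fC fin(1,2) fF[OF that(1)] UB psi projB orthB that(2,3)])
  have hA01: "0 \<le> hA f w \<and> hA f w \<le> 1" if "f \<in> set_pmf F" "w \<in> R" for f w
    using hAsum[OF that(1), of "{w}"] that(2) by (simp add: hA_def ns_nonneg)
  have hB01: "0 \<le> hB f w \<and> hB f w \<le> 1" if "f \<in> set_pmf F" "w \<in> R" for f w
    using hBsum[OF that(1), of "{w}"] that(2) by (simp add: hB_def ns_nonneg)
  obtain z0 where z0: "z0 \<in> set_pmf Z" using set_pmf_not_empty[of Z] by blast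
  have pm01: "0 \<le> pm \<and> pm \<le> 1"
  proof
    have bdd: "bdd_above ((\<lambda>w. measure_pmf.prob Z {z. g z = w}) ` R)"
      by (rule bdd_aboveI[of _ 1]) auto
    have "measure_pmf.prob Z {z. g z = g z0} \<le> pm" unfolding pm_def using gR[OF z0] bdd by (intro cSup_upper) auto
    then show "0 \<le> pm" using measure_nonneg[of "measure_pmf Z"] by (meson order_trans)
    show "pm \<le> 1" unfolding pm_def using gR[OF z0] by (intro cSup_least) auto
  qed
  have AEZ: "AE z in measure_pmf Z. P z" if "\<And>z. z \<in> set_pmf Z \<Longrightarrow> P z" for P
    using that by (rule AE_pmfI)
  have AEF: "AE f in measure_pmf F. P f" if "\<And>f. f \<in> set_pmf F \<Longrightarrow> P f" for P
    using that by (rule AE_pmfI)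
  define N where "N = real qB * real qC"
  have sum1: "(\<Sum>k<qB. \<Sum>l<qC. (1::real)) = N" unfolding N_def by simp
  have sumn: "0 \<le> (\<Sum>k<qB. \<Sum>l<qC. n f z k l) \<and> (\<Sum>k<qB. \<Sum>l<qC. n f z k l) \<le> N"
    if "f \<in> set_pmf F" "z \<in> set_pmf Z" for f z
  proof
    show "0 \<le> (\<Sum>k<qB. \<Sum>l<qC. n f z k l)" using n01[OF that] by (intro sum_nonneg) auto
    have "(\<Sum>k<qB. \<Sum>l<qC. n f z k l) \<le> (\<Sum>k<qB. \<Sum>l<qC. (1::real))"
      using n01[OF that] by (intro sum_mono) auto
    then show "(\<Sum>k<qB. \<Sum>l<qC. n f z k l) \<le> N" using sum1 by simp
  qed
  define EZn where "EZn = (\<lambda>f k l. measure_pmf.expectation Z (\<lambda>z. n f z k l))"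
  have EZn01: "0 \<le> EZn f k l \<and> EZn f k l \<le> 1" if "f \<in> set_pmf F" for f k l
    unfolding EZn_def by (rule exp_bounds) (auto intro!: AEZ simp: n01[OF that])
  have stepA: "measure_pmf.expectation Z (L f) \<le> 9 * pm + 16 * (\<Sum>k<qB. \<Sum>l<qC. EZn f k l)"
    if f: "f \<in> set_pmf F" for f
  proof -
    have iA: "integrable (measure_pmf Z) (\<lambda>z. hA f (g z))"
      by (rule int_pmf[where B=1], rule AEZ) (use hA01[OF f] gR in auto)
    have iB: "integrable (measure_pmf Z) (\<lambda>z. hB f (g z))"
      by (rule int_pmf[where B=1], rule AEZ) (use hB01[OF f] gR in auto)
    have iN: "integrable (measure_pmf Z) (\<lambda>z. n f z k l)" for k l
      by (rule int_pmf[where B=1], rule AEZ) (use n01[OF f] in auto)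
    have "measure_pmf.expectation Z (L f) \<le> measure_pmf.expectation Z
        (\<lambda>z. 6 * hA f (g z) + 3 * hB f (g z) + 16 * (\<Sum>k<qB. \<Sum>l<qC. n f z k l))"
    proof (rule exp_mono[where Ba=1 and Bb="9 + 16 * N"])
      show "AE z in measure_pmf Z. L f z \<le> 6 * hA f (g z) + 3 * hB f (g z) + 16 * (\<Sum>k<qB. \<Sum>l<qC. n f z k l)"
        by (rule AEZ) (rule pw[OF f])
      show "AE z in measure_pmf Z. \<bar>L f z\<bar> \<le> 1" by (rule AEZ) (use L01[OF f] in auto)
      show "AE z in measure_pmf Z. \<bar>6 * hA f (g z) + 3 * hB f (g z) + 16 * (\<Sum>k<qB. \<Sum>l<qC. n f z k l)\<bar> \<le> 9 + 16 * N"
      proof (rule AEZ)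
        fix z assume z: "z \<in> set_pmf Z"
        show "\<bar>6 * hA f (g z) + 3 * hB f (g z) + 16 * (\<Sum>k<qB. \<Sum>l<qC. n f z k l)\<bar> \<le> 9 + 16 * N"
          using hA01[OF f gR[OF z]] hB01[OF f gR[OF z]] sumn[OF f z] by auto
      qed
    qed
    also have "\<dots> = 6 * measure_pmf.expectation Z (\<lambda>z. hA f (g z)) + 3 * measure_pmf.expectation Z (\<lambda>z. hB f (g z))
        + 16 * (\<Sum>k<qB. \<Sum>l<qC. EZn f k l)"
      unfolding EZn_def using iA iB iN
      by (simp add: Bochner_Integration.integral_add integral_sum Bochner_Integration.integrable_sum)
    also have "\<dots> \<le> 6 * pm + 3 * pm + 16 * (\<Sum>k<qB. \<Sum>l<qC. EZn f k l)"
    proof -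
      have "measure_pmf.expectation Z (\<lambda>z. hA f (g z)) \<le> pm" unfolding pm_def
      proof (rule pmax_bound)
        show "\<And>z. z \<in> set_pmf Z \<Longrightarrow> g z \<in> R" by (rule gR)
        show "\<And>w. hA f w \<ge> 0" unfolding hA_def by (rule ns_nonneg)
        show "\<And>W. finite W \<Longrightarrow> W \<subseteq> R \<Longrightarrow> sum (hA f) W \<le> 1" by (rule hAsum[OF f])
      qed
      moreover have "measure_pmf.expectation Z (\<lambda>z. hB f (g z)) \<le> pm" unfolding pm_def
      proof (rule pmax_bound)
        show "\<And>z. z \<in> set_pmf Z \<Longrightarrow> g z \<in> R" by (rule gR)
        show "\<And>w. hB f w \<ge> 0" unfolding hB_def by (rule ns_nonneg)
        show "\<And>W. finite W \<Longrightarrow> W \<subseteq> R \<Longrightarrow> sum (hB f) W \<le> 1" by (rule hBsum[OF f])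
      qed
      ultimately show ?thesis by simp
    qed
    finally show ?thesis by simp
  qed
  define m where "m = (\<lambda>k l. measure_pmf.expectation F (\<lambda>f. measure_pmf.expectation Z (\<lambda>z. (n f z k l)\<^sup>2)))"
  have EZn2: "0 \<le> measure_pmf.expectation Z (\<lambda>z. (n f z k l)\<^sup>2) \<and> measure_pmf.expectation Z (\<lambda>z. (n f z k l)\<^sup>2) \<le> 1"
    if f: "f \<in> set_pmf F" for f k l
    by (rule exp_bounds, rule AEZ) (use n01[OF f] in \<open>auto intro: power_le_one\<close>)
  have m01: "0 \<le> m k l \<and> m k l \<le> 1" for k l
    unfolding m_def by (rule exp_bounds, rule AEF) (use EZn2 in auto)
  have iEZn: "integrable (measure_pmf F) (\<lambda>f. EZn f k l)" for k l
    by (rule int_pmf[where B=1], rule AEF) (use EZn01 in auto)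
  have sumEZn: "0 \<le> (\<Sum>k<qB. \<Sum>l<qC. EZn f k l) \<and> (\<Sum>k<qB. \<Sum>l<qC. EZn f k l) \<le> N"
    if f: "f \<in> set_pmf F" for f
  proof
    show "0 \<le> (\<Sum>k<qB. \<Sum>l<qC. EZn f k l)" using EZn01[OF f] by (intro sum_nonneg) auto
    have "(\<Sum>k<qB. \<Sum>l<qC. EZn f k l) \<le> (\<Sum>k<qB. \<Sum>l<qC. (1::real))"
      using EZn01[OF f] by (intro sum_mono) auto
    then show "(\<Sum>k<qB. \<Sum>l<qC. EZn f k l) \<le> N" using sum1 by simp
  qed
  have N0: "0 \<le> N" unfolding N_def by simp
  have stepB: "measure_pmf.expectation F (\<lambda>f. measure_pmf.expectation Z (L f))
      \<le> 9 * pm + 16 * (\<Sum>k<qB. \<Sum>l<qC. measure_pmf.expectation F (\<lambda>f. EZn f k l))"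
  proof -
    have "measure_pmf.expectation F (\<lambda>f. measure_pmf.expectation Z (L f))
        \<le> measure_pmf.expectation F (\<lambda>f. 9 * pm + 16 * (\<Sum>k<qB. \<Sum>l<qC. EZn f k l))"
    proof (rule exp_mono[where Ba=1 and Bb="9 + 16 * N"])
      show "AE f in measure_pmf F. measure_pmf.expectation Z (L f) \<le> 9 * pm + 16 * (\<Sum>k<qB. \<Sum>l<qC. EZn f k l)"
        by (rule AEF) (rule stepA)
      show "AE f in measure_pmf F. \<bar>measure_pmf.expectation Z (L f)\<bar> \<le> 1"
      proof (rule AEF)
        fix f assume f: "f \<in> set_pmf F"
        have "0 \<le> measure_pmf.expectation Z (L f) \<and> measure_pmf.expectation Z (L f) \<le> 1"
          by (rule exp_bounds, rule AEZ) (use L01[OF f] in auto)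
        then show "\<bar>measure_pmf.expectation Z (L f)\<bar> \<le> 1" by auto
      qed
      show "AE f in measure_pmf F. \<bar>9 * pm + 16 * (\<Sum>k<qB. \<Sum>l<qC. EZn f k l)\<bar> \<le> 9 + 16 * N"
      proof (rule AEF)
        fix f assume f: "f \<in> set_pmf F"
        show "\<bar>9 * pm + 16 * (\<Sum>k<qB. \<Sum>l<qC. EZn f k l)\<bar> \<le> 9 + 16 * N"
          using sumEZn[OF f] pm01 by auto
      qed
    qed
    also have "\<dots> = 9 * pm + 16 * (\<Sum>k<qB. \<Sum>l<qC. measure_pmf.expectation F (\<lambda>f. EZn f k l))"
      using iEZn by (simp add: Bochner_Integration.integral_add integral_sum Bochner_Integration.integrable_sum)
    finally show ?thesis .
  qed
  have stepC: "measure_pmf.expectation F (\<lambda>f. EZn f k l) \<le> sqrt (m k l)" for k l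
  proof -
    have "measure_pmf.expectation F (\<lambda>f. EZn f k l)
        \<le> measure_pmf.expectation F (\<lambda>f. sqrt (measure_pmf.expectation Z (\<lambda>z. (n f z k l)\<^sup>2)))"
    proof (rule exp_mono[where Ba=1 and Bb=1])
      show "AE f in measure_pmf F. EZn f k l \<le> sqrt (measure_pmf.expectation Z (\<lambda>z. (n f z k l)\<^sup>2))"
      proof (rule AEF)
        fix f assume f: "f \<in> set_pmf F"
        show "EZn f k l \<le> sqrt (measure_pmf.expectation Z (\<lambda>z. (n f z k l)\<^sup>2))"
          unfolding EZn_def by (rule jensen_pmf[where B=1], rule AEZ) (use n01[OF f] in auto)
      qed
      show "AE f in measure_pmf F. \<bar>EZn f k l\<bar> \<le> 1" by (rule AEF) (use EZn01 in auto)
      show "AE f in measure_pmf F. \<bar>sqrt (measure_pmf.expectation Z (\<lambda>z. (n f z k l)\<^sup>2))\<bar> \<le> 1"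
        by (rule AEF) (use EZn2 in auto)
    qed
    also have "\<dots> \<le> sqrt (m k l)" unfolding m_def
      by (rule jensen_sqrt[where B=1], rule AEF) (use EZn2 in auto)
    finally show ?thesis .
  qed
  define Ml where "Ml = (\<lambda>k. measure_pmf.expectation (pmf_of_set {..<qC}) (\<lambda>l. m k l))"
  define M where "M = measure_pmf.expectation (pmf_of_set {..<qB}) (\<lambda>k. Ml k)"
  have Ml01: "0 \<le> Ml k \<and> Ml k \<le> 1" for k
    unfolding Ml_def by (rule exp_bounds) (auto intro!: always_eventually simp: m01)
  have stepD1: "(\<Sum>l<qC. sqrt (m k l)) \<le> real qC * sqrt (Ml k)" for k
  proof -
    have "(\<Sum>l<qC. sqrt (m k l)) = real qC * measure_pmf.expectation (pmf_of_set {..<qC}) (\<lambda>l. sqrt (m k l))"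
      using qC by (simp add: unif_exp)
    also have "\<dots> \<le> real qC * sqrt (Ml k)" unfolding Ml_def
      by (intro mult_left_mono jensen_sqrt[where B=1]) (auto intro!: always_eventually simp: m01)
    finally show ?thesis .
  qed
  have stepD: "(\<Sum>k<qB. \<Sum>l<qC. sqrt (m k l)) \<le> N * sqrt M"
  proof -
    have "(\<Sum>k<qB. \<Sum>l<qC. sqrt (m k l)) \<le> (\<Sum>k<qB. real qC * sqrt (Ml k))"
      by (intro sum_mono stepD1)
    also have "\<dots> = real qC * (real qB * measure_pmf.expectation (pmf_of_set {..<qB}) (\<lambda>k. sqrt (Ml k)))"
    proof -
      have "(\<Sum>k<qB. sqrt (Ml k)) = real qB * measure_pmf.expectation (pmf_of_set {..<qB}) (\<lambda>k. sqrt (Ml k))"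
        using qB by (simp add: unif_exp)
      then show ?thesis by (simp add: sum_distrib_left[symmetric])
    qed
    also have "\<dots> \<le> real qC * (real qB * sqrt M)" unfolding M_def
      by (intro mult_left_mono jensen_sqrt[where B=1]) (auto intro!: always_eventually simp: Ml01)
    finally show ?thesis unfolding N_def by (simp add: mult_ac)
  qed
  have "measure_pmf.expectation F (\<lambda>f. measure_pmf.expectation Z (L f))
      \<le> 9 * pm + 16 * (\<Sum>k<qB. \<Sum>l<qC. sqrt (m k l))"
    using stepB stepC by (smt (verit) sum_mono)
  also have "\<dots> \<le> 9 * pm + 16 * (N * sqrt M)" using stepD by simp
  finally have fin: "measure_pmf.expectation F (\<lambda>f. measure_pmf.expectation Z (L f)) \<le> 9 * pm + 16 * N * sqrt M"
    by (simp add: mult_ac)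
  show ?thesis using fin unfolding L_def M_def Ml_def m_def n_def N_def pm_def S_def by (simp add: mult_ac)
qed

theorem mainTheorem8:
  shows "\<exists>P :: real poly poly.
   \<forall>(X :: bs set) (m :: nat) (WB :: nat set) (WC :: nat set) (R :: bs set) (r :: nat)
     (F :: (bs \<Rightarrow> bs) pmf) (Zs :: bs list set) (Z :: bs list pmf) (g :: bs list \<Rightarrow> bs)
     (v :: bs list) (UB :: bidx oper) (UC :: bidx oper) (\<psi> :: (bidx \<times> bidx) vect)
     (qB :: nat) (qC :: nat) (PiB :: bs \<Rightarrow> bidx oper) (PiC :: bs \<Rightarrow> bidx oper).
   (let SB = reg_space X m WB; SC = reg_space X m WC; S = SB \<times> SC in
    finite X \<and> finite WB \<and> finite WC \<and>
    (\<forall>f\<in>set_pmf F. \<forall>x\<in>X. f x \<in> strings_of_len m) \<and>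
    Zs \<subseteq> {z. length z = r \<and> set z \<subseteq> strings_of_len m} \<and> set_pmf Z \<subseteq> Zs \<and>
    inj_on g Zs \<and> g ` Zs \<subseteq> R \<and>
    length v = r \<and> set v \<subseteq> X \<and> distinct v \<and>
    is_unitary SB UB \<and> is_unitary SC UC \<and> is_state S \<psi> \<and>
    0 < qB \<and> 0 < qC \<and>
    (\<forall>w\<in>R. is_projector SB (PiB w) \<and> is_projector SC (PiC w)) \<and>
    (\<forall>w\<in>R. \<forall>w'\<in>R. w \<noteq> w' \<longrightarrow>
        op_mult SB (PiB w) (PiB w') = (\<lambda>_ _. 0) \<and> op_mult SC (PiC w) (PiC w') = (\<lambda>_ _. 0))
    \<longrightarrow>
    measure_pmf.expectation F (\<lambda>f. measure_pmf.expectation Z (\<lambda>z.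
        (vnorm S (op_apply S (tensor (PiB (g z)) (PiC (g z)))
          (op_apply S (tensor (op_pow SB (query_op SB UB (reprogram f v z)) qB)
                              (op_pow SC (query_op SC UC (reprogram f v z)) qC)) \<psi>)))\<^sup>2))
    \<le> 9 * Sup ((\<lambda>w. measure_pmf.prob Z {z. g z = w}) ` R)
      + eval_poly2 P (real qB) (real qC) *
        sqrt (measure_pmf.expectation (pmf_of_set {..<qB}) (\<lambda>k.
              measure_pmf.expectation (pmf_of_set {..<qC}) (\<lambda>l.
              measure_pmf.expectation F (\<lambda>f. measure_pmf.expectation Z (\<lambda>z.
                (vnorm S (op_apply S (tensor (query_proj SB v) (query_proj SC v))
                  (op_apply S (tensor (op_pow SB (query_op SB UB (reprogram f v z)) k)
                                      (op_pow SC (query_op SC UC (reprogram f v z)) l)) \<psi>)))\<^sup>2))))))"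
proof (intro exI[of _ "[:0, [:0, 16:]:]"] allI)
  fix X :: "bs set" and m :: nat and WB WC :: "nat set" and R :: "bs set" and r :: nat
    and F :: "(bs \<Rightarrow> bs) pmf" and Zs :: "bs list set" and Z :: "bs list pmf" and g :: "bs list \<Rightarrow> bs"
    and v :: "bs list" and UB UC :: "bidx oper" and \<psi> :: "(bidx \<times> bidx) vect"
    and qB qC :: nat and PiB PiC :: "bs \<Rightarrow> bidx oper"
  have ev: "eval_poly2 [:0, [:0, 16:]:] (real qB) (real qC) = 16 * real qB * real qC"
    by (simp add: eval_poly2_def)
  show "let SB = reg_space X m WB; SC = reg_space X m WC; S = SB \<times> SC in
    finite X \<and> finite WB \<and> finite WC \<and>
    (\<forall>f\<in>set_pmf F. \<forall>x\<in>X. f x \<in> strings_of_len m) \<and>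
    Zs \<subseteq> {z. length z = r \<and> set z \<subseteq> strings_of_len m} \<and> set_pmf Z \<subseteq> Zs \<and>
    inj_on g Zs \<and> g ` Zs \<subseteq> R \<and>
    length v = r \<and> set v \<subseteq> X \<and> distinct v \<and>
    is_unitary SB UB \<and> is_unitary SC UC \<and> is_state S \<psi> \<and>
    0 < qB \<and> 0 < qC \<and>
    (\<forall>w\<in>R. is_projector SB (PiB w) \<and> is_projector SC (PiC w)) \<and>
    (\<forall>w\<in>R. \<forall>w'\<in>R. w \<noteq> w' \<longrightarrow>
        op_mult SB (PiB w) (PiB w') = (\<lambda>_ _. 0) \<and> op_mult SC (PiC w) (PiC w') = (\<lambda>_ _. 0))
    \<longrightarrow>
    measure_pmf.expectation F (\<lambda>f. measure_pmf.expectation Z (\<lambda>z.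
        (vnorm S (op_apply S (tensor (PiB (g z)) (PiC (g z)))
          (op_apply S (tensor (op_pow SB (query_op SB UB (reprogram f v z)) qB)
                              (op_pow SC (query_op SC UC (reprogram f v z)) qC)) \<psi>)))\<^sup>2))
    \<le> 9 * Sup ((\<lambda>w. measure_pmf.prob Z {z. g z = w}) ` R)
      + eval_poly2 [:0, [:0, 16:]:] (real qB) (real qC) *
        sqrt (measure_pmf.expectation (pmf_of_set {..<qB}) (\<lambda>k.
              measure_pmf.expectation (pmf_of_set {..<qC}) (\<lambda>l.
              measure_pmf.expectation F (\<lambda>f. measure_pmf.expectation Z (\<lambda>z.
                (vnorm S (op_apply S (tensor (query_proj SB v) (query_proj SC v))
                  (op_apply S (tensor (op_pow SB (query_op SB UB (reprogram f v z)) k)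
                                      (op_pow SC (query_op SC UC (reprogram f v z)) l)) \<psi>)))\<^sup>2)))))"
    unfolding Let_def ev
  proof (intro impI, elim conjE)
    assume fin: "finite X" "finite WB" "finite WC"
      and fF: "\<forall>f\<in>set_pmf F. \<forall>x\<in>X. f x \<in> strings_of_len m"
      and Zs: "Zs \<subseteq> {z. length z = r \<and> set z \<subseteq> strings_of_len m}" and ZZs: "set_pmf Z \<subseteq> Zs"
      and gR: "g ` Zs \<subseteq> R"
      and UB: "is_unitary (reg_space X m WB) UB" and UC: "is_unitary (reg_space X m WC) UC"
      and psi: "is_state (reg_space X m WB \<times> reg_space X m WC) \<psi>"
      and qB: "0 < qB" and qC: "0 < qC"
      and proj: "\<forall>w\<in>R. is_projector (reg_space X m WB) (PiB w) \<and> is_projector (reg_space X m WC) (PiC w)"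
      and orth: "\<forall>w\<in>R. \<forall>w'\<in>R. w \<noteq> w' \<longrightarrow>
        op_mult (reg_space X m WB) (PiB w) (PiB w') = (\<lambda>_ _. 0) \<and> op_mult (reg_space X m WC) (PiC w) (PiC w') = (\<lambda>_ _. 0)"
    show "measure_pmf.expectation F (\<lambda>f. measure_pmf.expectation Z (\<lambda>z.
        (vnorm (reg_space X m WB \<times> reg_space X m WC) (op_apply (reg_space X m WB \<times> reg_space X m WC) (tensor (PiB (g z)) (PiC (g z)))
          (op_apply (reg_space X m WB \<times> reg_space X m WC) (tensor (op_pow (reg_space X m WB) (query_op (reg_space X m WB) UB (reprogram f v z)) qB)
                              (op_pow (reg_space X m WC) (query_op (reg_space X m WC) UC (reprogram f v z)) qC)) \<psi>)))\<^sup>2))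
    \<le> 9 * Sup ((\<lambda>w. measure_pmf.prob Z {z. g z = w}) ` R)
      + 16 * real qB * real qC *
        sqrt (measure_pmf.expectation (pmf_of_set {..<qB}) (\<lambda>k.
              measure_pmf.expectation (pmf_of_set {..<qC}) (\<lambda>l.
              measure_pmf.expectation F (\<lambda>f. measure_pmf.expectation Z (\<lambda>z.
                (vnorm (reg_space X m WB \<times> reg_space X m WC) (op_apply (reg_space X m WB \<times> reg_space X m WC) (tensor (query_proj (reg_space X m WB) v) (query_proj (reg_space X m WC) v))
                  (op_apply (reg_space X m WB \<times> reg_space X m WC) (tensor (op_pow (reg_space X m WB) (query_op (reg_space X m WB) UB (reprogram f v z)) k)
                                      (op_pow (reg_space X m WC) (query_op (reg_space X m WC) UC (reprogram f v z)) l)) \<psi>)))\<^sup>2)))))"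
    proof (rule main_bound[OF refl refl fin _ _ _ UB UC psi qB qC])
      show "\<And>f. f \<in> set_pmf F \<Longrightarrow> \<forall>x\<in>X. f x \<in> strings_of_len m" using fF by blast
      show "\<And>z. z \<in> set_pmf Z \<Longrightarrow> set z \<subseteq> strings_of_len m" using Zs ZZs by blast
      show "\<And>z. z \<in> set_pmf Z \<Longrightarrow> g z \<in> R" using gR ZZs by blast
      show "\<And>w. w \<in> R \<Longrightarrow> is_projector (reg_space X m WB) (PiB w)" using proj by blast
      show "\<And>w. w \<in> R \<Longrightarrow> is_projector (reg_space X m WC) (PiC w)" using proj by blast
      show "\<And>w w'. w \<in> R \<Longrightarrow> w' \<in> R \<Longrightarrow> w \<noteq> w' \<Longrightarrow> op_mult (reg_space X m WB) (PiB w) (PiB w') = (\<lambda>_ _. 0)"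
        using orth by blast
      show "\<And>w w'. w \<in> R \<Longrightarrow> w' \<in> R \<Longrightarrow> w \<noteq> w' \<Longrightarrow> op_mult (reg_space X m WC) (PiC w) (PiC w') = (\<lambda>_ _. 0)"
        using orth by blast
    qed
  qed
qed

end
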